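(* The monomials $x_1^{p_1}x_2^{p_2}\cdots x_n^{p_n}g$, for non-negative integers $p_1,\ldots,p_n$ and $g\in G$, form a basis of $\mathsf{H}$. Consequently, with the filtration on $\mathsf{H}$ given by $\deg x_i=1$, $\deg g=0$, the natural homomorphism $SV\#_\alpha G\to\operatorname{gr}\mathsf{H}$ is an isomorphism, where $SV$ is the symmetric algebra of $V$.
   Context: Fix integers $n\ge 3$ and $\ell\ge 2$, and let $\zeta$ be a primitive $\ell$-th root of unity. All subscripts are taken modulo $n$. Let $V=\mathbb{C}^n$ with standard basis $x_1,\ldots,x_n$, and let $G$ be the group of all diagonal matrices $g\in SL_n(\mathbb{C})$ with $g^\ell=1$, acting on $V$, $TV$ and $SV$. For $i=1,\ldots,n$ let $g_i\in G$ be given by $g_i(x_i)=\zeta x_i$, $g_i(x_{i+1})=\zeta^{-1}x_{i+1}$, $g_i(x_j)=x_j$ otherwise; $g_1,\ldots,g_{n-1}$ freely generate $G\cong(\mathbb{Z}/\ell\mathbb{Z})^{n-1}$. Define the 2-cocycle $\alpha$ by $\alpha(g_1^{i_1}\cdots g_{n-1}^{i_{n-1}},g_1^{j_1}\cdots g_{n-1}^{j_{n-1}})=\zeta^{-i_1j_2-\cdots-i_{n-2}j_{n-1}}$. For an algebra $E$ with $G$-action, $E\#_\alpha G$ is $E\otimes\mathbb{C}G$ with product $(r\otimes g)(s\otimes h)=\alpha(g,h)\,r\,(g\cdot s)\otimes gh$. Let $t\in\mathbb{C}^n$. $\mathsf{H}$ is the quotient of $TV\#_\alpha G$ by the relations $x_ix_{i+1}-x_{i+1}x_i=t_ig_i$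 for all $i$, and $x_ix_j=x_jx_i$ whenever $|i-j|\notin\{1,n-1\}$. *)

theory Defs
  imports Complex_Main
begin

text \<open>Conventions: indices are 0-based, i.e. the paper's x_1..x_n are x_0..x_(n-1) here,
  and subscripts are taken mod n.  Diagonal matrices are represented by their diagonal
  entries as a function nat => complex (entries at positions >= n are 1).\<close>

type_synonym grp = "nat \<Rightarrow> complex"
type_synonym idx = "nat list \<times> grp"
type_synonym elem = "idx \<Rightarrow> complex"

definition Gset :: "nat \<Rightarrow> nat \<Rightarrow> grp set" where
  "Gset n l = {g. (\<forall>i\<ge>n. g i = 1) \<and> (\<forall>i<n. g i ^ l = 1) \<and> (\<Prod>i<n. g i) = 1}"

definition gone :: grp where "gone = (\<lambda>_. 1)"

definition gmul :: "grp \<Rightarrow> grp \<Rightarrow> grp" where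
  "gmul g h = (\<lambda>i. g i * h i)"

definition gen :: "nat \<Rightarrow> complex \<Rightarrow> nat \<Rightarrow> grp" where
  "gen n \<zeta> i = (\<lambda>m. if m = i then \<zeta> else if m = Suc i mod n then inverse \<zeta> else 1)"

text \<open>g_0^(e 0) * ... * g_(n-2)^(e (n-2)) (the paper's g_1^(i_1) ... g_(n-1)^(i_(n-1)))\<close>
definition gprod :: "nat \<Rightarrow> complex \<Rightarrow> (nat \<Rightarrow> nat) \<Rightarrow> grp" where
  "gprod n \<zeta> e = (\<lambda>m. \<Prod>k<n-1. gen n \<zeta> k m ^ e k)"

definition gexp :: "nat \<Rightarrow> nat \<Rightarrow> complex \<Rightarrow> grp \<Rightarrow> nat \<Rightarrow> nat" where
  "gexp n l \<zeta> g = (THE e. (\<forall>k. e k < l) \<and> (\<forall>k\<ge>n-1. e k = 0) \<and> g = gprod n \<zeta> e)"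

definition alpha :: "nat \<Rightarrow> nat \<Rightarrow> complex \<Rightarrow> grp \<Rightarrow> grp \<Rightarrow> complex" where
  "alpha n l \<zeta> g h = inverse \<zeta> ^ (\<Sum>k<n-2. gexp n l \<zeta> g k * gexp n l \<zeta> h (Suc k))"

text \<open>Elements of TV #_alpha G: finitely supported coefficient functions on the basis
  (w, g) = x_(w!0) ... x_(w!(k-1)) \<otimes> g, with letters < n and g in G.\<close>
definition Alg :: "nat \<Rightarrow> nat \<Rightarrow> elem set" where
  "Alg n l = {a. finite {x. a x \<noteq> 0} \<and>
     (\<forall>w g. a (w, g) \<noteq> 0 \<longrightarrow> set w \<subseteq> {..<n} \<and> g \<in> Gset n l)}"

definition supp :: "elem \<Rightarrow> idx set" where "supp a = {x. a x \<noteq> 0}"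

definition B :: "nat list \<Rightarrow> grp \<Rightarrow> elem" where
  "B w g = (\<lambda>x. if x = (w, g) then 1 else 0)"

definition eadd :: "elem \<Rightarrow> elem \<Rightarrow> elem" where "eadd a b = (\<lambda>x. a x + b x)"
definition esub :: "elem \<Rightarrow> elem \<Rightarrow> elem" where "esub a b = (\<lambda>x. a x - b x)"
definition esmul :: "complex \<Rightarrow> elem \<Rightarrow> elem" where "esmul c a = (\<lambda>x. c * a x)"
definition ezero :: elem where "ezero = (\<lambda>_. 0)"

text \<open>structure constant: (w \<otimes> g)(v \<otimes> h) = alpha(g,h) w (g.v) \<otimes> gh, with g.v = (prod of
  the diagonal entries of g at the letters of v) v\<close>
definition scoef :: "nat \<Rightarrow> nat \<Rightarrow> complex \<Rightarrow> idx \<Rightarrow> idx \<Rightarrow> complex" where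
  "scoef n l \<zeta> x y = alpha n l \<zeta> (snd x) (snd y) * prod_list (map (snd x) (fst y))"

definition emul :: "nat \<Rightarrow> nat \<Rightarrow> complex \<Rightarrow> elem \<Rightarrow> elem \<Rightarrow> elem" where
  "emul n l \<zeta> a b = (\<lambda>z. \<Sum>x\<in>supp a. \<Sum>y\<in>supp b.
      a x * b y * scoef n l \<zeta> x y * (if z = (fst x @ fst y, gmul (snd x) (snd y)) then 1 else 0))"

definition X :: "nat \<Rightarrow> elem" where "X i = B [i] gone"
definition Gel :: "grp \<Rightarrow> elem" where "Gel g = B [] g"

definition Rels :: "nat \<Rightarrow> nat \<Rightarrow> complex \<Rightarrow> (nat \<Rightarrow> complex) \<Rightarrow> elem set" where
  "Rels n l \<zeta> t =
     {esub (esub (emul n l \<zeta> (X i) (X (Suc i mod n))) (emul n l \<zeta> (X (Suc i mod n)) (X i)))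
           (esmul (t i) (Gel (gen n \<zeta> i))) | i. i < n}
   \<union> {esub (emul n l \<zeta> (X i) (X j)) (emul n l \<zeta> (X j) (X i)) | i j.
        i < n \<and> j < n \<and> nat \<bar>int i - int j\<bar> \<notin> {1, n - 1}}"

inductive_set Ideal :: "nat \<Rightarrow> nat \<Rightarrow> complex \<Rightarrow> (nat \<Rightarrow> complex) \<Rightarrow> elem set"
  for n l \<zeta> t where
  gen_rel: "r \<in> Rels n l \<zeta> t \<Longrightarrow> r \<in> Ideal n l \<zeta> t"
| zero: "ezero \<in> Ideal n l \<zeta> t"
| add: "a \<in> Ideal n l \<zeta> t \<Longrightarrow> b \<in> Ideal n l \<zeta> t \<Longrightarrow> eadd a b \<in> Ideal n l \<zeta> t"
| smul: "a \<in> Ideal n l \<zeta> t \<Longrightarrow> esmul c a \<in> Ideal n l \<zeta> t"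
| lmul: "a \<in> Ideal n l \<zeta> t \<Longrightarrow> b \<in> Alg n l \<Longrightarrow> emul n l \<zeta> b a \<in> Ideal n l \<zeta> t"
| rmul: "a \<in> Ideal n l \<zeta> t \<Longrightarrow> b \<in> Alg n l \<Longrightarrow> emul n l \<zeta> a b \<in> Ideal n l \<zeta> t"

definition Mon :: "nat \<Rightarrow> nat \<Rightarrow> ((nat \<Rightarrow> nat) \<times> grp) set" where
  "Mon n l = {(p, g). (\<forall>i\<ge>n. p i = 0) \<and> g \<in> Gset n l}"

definition mono :: "nat \<Rightarrow> (nat \<Rightarrow> nat) \<times> grp \<Rightarrow> elem" where
  "mono n m = B (concat (map (\<lambda>i. replicate (fst m i) i) [0..<n])) (snd m)"

definition lincomb :: "nat \<Rightarrow> ((nat \<Rightarrow> nat) \<times> grp) set \<Rightarrow> ((nat \<Rightarrow> nat) \<times> grp \<Rightarrow> complex) \<Rightarrow> elem" where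
  "lincomb n S c = (\<lambda>x. \<Sum>m\<in>S. c m * mono n m x)"

definition monomials_basis :: "nat \<Rightarrow> nat \<Rightarrow> complex \<Rightarrow> (nat \<Rightarrow> complex) \<Rightarrow> bool" where
  "monomials_basis n l \<zeta> t \<longleftrightarrow>
     (\<forall>a\<in>Alg n l. \<exists>S c. finite S \<and> S \<subseteq> Mon n l \<and> esub a (lincomb n S c) \<in> Ideal n l \<zeta> t)
   \<and> (\<forall>S c. finite S \<and> S \<subseteq> Mon n l \<and> lincomb n S c \<in> Ideal n l \<zeta> t \<longrightarrow> (\<forall>m\<in>S. c m = 0))"

text \<open>Filtration by degree (deg x_i = 1, deg g = 0): preimages in TV #_alpha G of F_d H
  are Fle d + Ideal; F_(d-1) H corresponds to Flt d + Ideal (Flt 0 = 0).\<close>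
definition Fle :: "nat \<Rightarrow> nat \<Rightarrow> nat \<Rightarrow> elem set" where
  "Fle n l d = {a \<in> Alg n l. \<forall>x. a x \<noteq> 0 \<longrightarrow> length (fst x) \<le> d}"
definition Flt :: "nat \<Rightarrow> nat \<Rightarrow> nat \<Rightarrow> elem set" where
  "Flt n l d = {a \<in> Alg n l. \<forall>x. a x \<noteq> 0 \<longrightarrow> length (fst x) < d}"

definition MonDeg :: "nat \<Rightarrow> nat \<Rightarrow> nat \<Rightarrow> ((nat \<Rightarrow> nat) \<times> grp) set" where
  "MonDeg n l d = {m \<in> Mon n l. (\<Sum>i<n. fst m i) = d}"

text \<open>The natural map SV #_alpha G \<rightarrow> gr H sends the basis element x^p \<otimes> g of
  SV_d \<otimes> CG to the class of x_0^(p 0)...x_(n-1)^(p (n-1)) g in F_d H / F_(d-1) H.\<close>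
definition gr_map_iso :: "nat \<Rightarrow> nat \<Rightarrow> complex \<Rightarrow> (nat \<Rightarrow> complex) \<Rightarrow> bool" where
  "gr_map_iso n l \<zeta> t \<longleftrightarrow> (\<forall>d.
     (\<forall>a\<in>Fle n l d. \<exists>S c b. finite S \<and> S \<subseteq> MonDeg n l d \<and> b \<in> Flt n l d \<and>
          esub (esub a (lincomb n S c)) b \<in> Ideal n l \<zeta> t)
   \<and> (\<forall>S c b. finite S \<and> S \<subseteq> MonDeg n l d \<and> b \<in> Flt n l d \<and>
          esub (lincomb n S c) b \<in> Ideal n l \<zeta> t \<longrightarrow> (\<forall>m\<in>S. c m = 0)))"

end

theory Submission
  imports Defs
begin
locale P =
  fixes n l :: nat and z :: complex and t :: "nat \<Rightarrow> complex"
  assumes n3: "n \<ge> 3" and l2: "l \<ge> 2" and zl: "z ^ l = 1"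
    and prim: "\<forall>k. 0 < k \<and> k < l \<longrightarrow> z ^ k \<noteq> 1"
begin

lemma z0: "z \<noteq> 0"
proof
  assume "z = 0" hence "z ^ l = 0" using l2 by simp
  thus False using zl by simp
qed

lemma zpow_mod: "z ^ k = z ^ (k mod l)"
proof -
  have kk: "l * (k div l) + k mod l = k" by simp
  have "z ^ k = z ^ (l * (k div l) + k mod l)" by (simp only: kk)
  also have "\<dots> = z ^ (k mod l)" by (simp only: power_add power_mult zl power_one mult_1)
  finally show ?thesis .
qed

lemma zpow_eq_mod: "a mod l = b mod l \<Longrightarrow> z ^ a = z ^ b"
  by (metis zpow_mod)

lemma zpow_inj_aux: assumes "a < b" "b < l" shows "z ^ a \<noteq> z ^ b"
proof
  have e: "z ^ a * z ^ (b - a) = z ^ b" using assms by (simp flip: power_add)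
  assume "z ^ a = z ^ b"
  hence "z ^ a * z ^ (b - a) = z ^ a * 1" using e by simp
  hence "z ^ (b - a) = 1" using z0 by simp
  thus False using prim assms by auto
qed

lemma zpow_inj: "a < l \<Longrightarrow> b < l \<Longrightarrow> z ^ a = z ^ b \<Longrightarrow> a = b"
  by (metis linorder_neqE_nat zpow_inj_aux)

lemma zpow_eq_iff: "z ^ a = z ^ b \<longleftrightarrow> a mod l = b mod l"
proof
  assume "z ^ a = z ^ b"
  hence "z ^ (a mod l) = z ^ (b mod l)" by (metis zpow_mod)
  thus "a mod l = b mod l" using l2 by (intro zpow_inj) auto
qed (rule zpow_eq_mod)

lemma roots_are_pows: assumes "w ^ l = 1" shows "\<exists>a<l. w = z ^ a"
proof -
  let ?R = "{w::complex. w ^ l = 1}"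
  have sub: "(\<lambda>a. z ^ a) ` {..<l} \<subseteq> ?R"
  proof
    fix w assume "w \<in> (\<lambda>a. z ^ a) ` {..<l}"
    then obtain a where "w = z ^ a" by auto
    have "(z ^ a) ^ l = (z ^ l) ^ a" by (simp add: power_mult[symmetric] mult.commute)
    thus "w \<in> ?R" using \<open>w = z ^ a\<close> zl by simp
  qed
  have inj: "inj_on (\<lambda>a. z ^ a) {..<l}" by (auto intro!: inj_onI zpow_inj)
  have c1: "card ((\<lambda>a. z ^ a) ` {..<l}) = l" using card_image[OF inj] by simp
  have fin: "finite ?R" using l2 by (intro finite_roots_unity) auto
  have c2: "card ?R \<le> l" using l2 by (intro card_roots_unity) auto
  have "(\<lambda>a. z ^ a) ` {..<l} = ?R"
    using card_subset_eq[OF fin sub] c1 c2 card_mono[OF fin sub] by simp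
  thus ?thesis using assms by auto
qed

end

context P begin

abbreviation "G \<equiv> Gset n l"
abbreviation "iz \<equiv> inverse z"

lemma iz_pow_l: "iz ^ l = 1" using zl by (simp add: power_inverse)
lemma iz_mod: "iz ^ k = iz ^ (k mod l)"
  by (metis power_inverse zpow_mod)
lemma iz_ne0: "iz ^ k \<noteq> 0" using z0 by simp
lemma z_iz: "z ^ a * iz ^ a = 1" using z0 by (simp add: power_inverse[symmetric] field_simps)

lemma gen_eq: "k < n - 1 \<Longrightarrow> gen n z k m = (if m = k then z else if m = Suc k then iz else 1)"
  unfolding gen_def by auto

lemma gen_last: "gen n z (n-1) m = (if m = n - 1 then z else if m = 0 then iz else 1)"
  unfolding gen_def using n3 by auto

lemma gprod_eq: "gprod n z e m = (if m < n - 1 then z ^ e m else 1) *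
   (if 0 < m \<and> m < n then iz ^ e (m - 1) else 1)"
proof -
  have "gprod n z e m = (\<Prod>k<n-1. (if k = m then z ^ e k else 1) * (if k = m - 1 \<and> 0 < m then iz ^ e k else 1))"
    unfolding gprod_def by (intro prod.cong refl) (auto simp: gen_eq)
  also have "\<dots> = (\<Prod>k<n-1. (if k = m then z ^ e k else 1)) * (\<Prod>k<n-1. (if k = m - 1 \<and> 0 < m then iz ^ e k else 1))"
    by (rule prod.distrib)
  also have "(\<Prod>k<n-1. (if k = m then z ^ e k else 1)) = (if m < n - 1 then z ^ e m else 1)"
    by (simp add: prod.delta)
  also have "(\<Prod>k<n-1. (if k = m - 1 \<and> 0 < m then iz ^ e k else 1)) = (if 0 < m \<and> m < n then iz ^ e (m - 1) else 1)"
  proof (cases "0 < m")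
    case True
    have "(\<Prod>k<n-1. (if k = m - 1 \<and> 0 < m then iz ^ e k else 1)) = (\<Prod>k<n-1. (if k = m - 1 then iz ^ e k else 1))"
      using True by simp
    also have "\<dots> = (if m - 1 < n - 1 then iz ^ e (m-1) else 1)" by (simp add: prod.delta)
    finally show ?thesis using True n3 by auto
  qed simp
  finally show ?thesis .
qed

lemma gprod_ge: "m \<ge> n \<Longrightarrow> gprod n z e m = 1" by (auto simp: gprod_eq)

definition Ex :: "(nat \<Rightarrow> nat) set" where
  "Ex = {e. (\<forall>k. e k < l) \<and> (\<forall>k\<ge>n-1. e k = 0)}"

lemma gprod_inj: assumes "e \<in> Ex" "e' \<in> Ex" "gprod n z e = gprod n z e'" shows "e = e'"
proof
  fix k
  show "e k = e' k"
  proof (cases "k < n - 1")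
    case False thus ?thesis using assms(1,2) unfolding Ex_def by auto
  next
    case True
    thus ?thesis
    proof (induction k)
      case 0
      have "gprod n z e 0 = gprod n z e' 0" using assms(3) by simp
      hence "z ^ e 0 = z ^ e' 0" using 0 by (simp add: gprod_eq)
      thus ?case using assms(1,2) unfolding Ex_def by (intro zpow_inj) auto
    next
      case (Suc k)
      have ih: "e k = e' k" using Suc by auto
      have "gprod n z e (Suc k) = gprod n z e' (Suc k)" using assms(3) by simp
      moreover have "gprod n z e (Suc k) = z ^ e (Suc k) * iz ^ e k" using Suc.prems by (auto simp: gprod_eq)
      moreover have "gprod n z e' (Suc k) = z ^ e' (Suc k) * iz ^ e' k" using Suc.prems by (auto simp: gprod_eq)
      ultimately have "z ^ e (Suc k) * iz ^ e k = z ^ e' (Suc k) * iz ^ e k" using ih by simp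
      hence "z ^ e (Suc k) = z ^ e' (Suc k)" using iz_ne0 by (metis mult_right_cancel)
      thus ?case using assms(1,2) unfolding Ex_def by (intro zpow_inj) auto
    qed
  qed
qed

lemma gexp_unique: assumes "e \<in> Ex" "g = gprod n z e" shows "gexp n l z g = e"
  unfolding gexp_def
proof (rule the_equality)
  show "(\<forall>k. e k < l) \<and> (\<forall>k\<ge>n - 1. e k = 0) \<and> g = gprod n z e" using assms unfolding Ex_def by auto
  fix e' assume "(\<forall>k. e' k < l) \<and> (\<forall>k\<ge>n - 1. e' k = 0) \<and> g = gprod n z e'"
  thus "e' = e" using assms gprod_inj unfolding Ex_def by auto
qed

lemma gprod_in_G: assumes "e \<in> Ex" shows "gprod n z e \<in> G"
proof -
  let ?g = "gprod n z e"
  have pw: "?g m ^ l = 1" for m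
  proof -
    have "(z ^ a) ^ l = 1" for a by (metis power_mult mult.commute power_one zl)
    moreover have "(iz ^ a) ^ l = 1" for a by (metis power_mult mult.commute power_one iz_pow_l)
    ultimately show ?thesis by (simp add: gprod_eq power_mult_distrib)
  qed
  have "(\<Prod>m<n. ?g m) = 1"
  proof -
    have "\<And>N. N \<le> n - 1 \<Longrightarrow> (\<Prod>m<N. ?g m) = (if N = 0 then 1 else z ^ e (N - 1))"
    proof -
      fix N show "N \<le> n - 1 \<Longrightarrow> (\<Prod>m<N. ?g m) = (if N = 0 then 1 else z ^ e (N - 1))"
      proof (induction N)
        case (Suc N)
        thus ?case using n3 z_iz by (auto simp: gprod_eq mult.commute mult.left_commute)
      qed simp
    qed
    from this[of "n-1"] have "(\<Prod>m<n-1. ?g m) = z ^ e (n - 2)" using n3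
      by (simp add: numeral_2_eq_2)
    moreover have "?g (n - 1) = iz ^ e (n - 2)" using n3 assms unfolding Ex_def
      by (simp add: gprod_eq) (metis Suc_1 diff_diff_left numeral_2_eq_2 plus_1_eq_Suc)
    moreover have "{..<n} = insert (n-1) {..<n-1}" using n3 by auto
    ultimately show ?thesis using z_iz by (simp add: mult.commute)
  qed
  thus ?thesis using pw unfolding Gset_def by (auto simp: gprod_ge)
qed

end

context P begin

lemma G_exists: assumes "g \<in> G" shows "\<exists>e\<in>Ex. g = gprod n z e"
proof -
  have "\<forall>i. \<exists>a<l. g i = z ^ a"
  proof
    fix i show "\<exists>a<l. g i = z ^ a"
    proof (cases "i < n")
      case True thus ?thesis using assms roots_are_pows unfolding Gset_def by auto
    next
      case False thus ?thesis using assms l2 unfolding Gset_def by (intro exI[of _ 0]) auto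
    qed
  qed
  then obtain a where a: "\<And>i. a i < l" "\<And>i. g i = z ^ a i" by metis
  define S where "S k = (\<Sum>i\<le>k. a i)" for k
  define e where "e k = (if k < n - 1 then S k mod l else 0)" for k
  have eE: "e \<in> Ex" unfolding Ex_def e_def using l2 by auto
  have "g m = gprod n z e m" for m
  proof -
    consider "m = 0" | "0 < m" "m < n - 1" | "m = n - 1" | "m \<ge> n" by linarith
    thus ?thesis
    proof cases
      case 1 thus ?thesis using n3 a(2)[of 0] by (simp add: gprod_eq e_def S_def zpow_mod[symmetric])
    next
      case 2
      have "gprod n z e m = z ^ S m * iz ^ S (m - 1)" using 2
        by (auto simp: gprod_eq e_def zpow_mod[symmetric] iz_mod[symmetric])
      also have "S m = S (m - 1) + a m" using 2 unfolding S_def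
        by (metis Suc_diff_1 sum.atMost_Suc)
      finally have "gprod n z e m = z ^ a m * (z ^ S (m - 1) * iz ^ S (m - 1))"
        by (simp add: power_add mult_ac)
      thus ?thesis using a(2) z_iz by simp
    next
      case 3
      have m1: "m - 1 = n - 2" "m - 1 < n - 1" "\<not> m < n - 1" "0 < m" "m < n" using 3 n3 by auto
      have "gprod n z e m = iz ^ S (n - 2)" unfolding gprod_eq using m1
        by (simp add: e_def iz_mod[symmetric])
      have pr: "(\<Prod>i<n. g i) = 1" using assms unfolding Gset_def by auto
      have "{..<n} = insert (n-1) {..<n-1}" using n3 by auto
      hence "(\<Prod>i<n. g i) = g (n - 1) * (\<Prod>i<n-1. g i)" by simp
      also have "(\<Prod>i<n-1. g i) = z ^ S (n - 2)"
      proof -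
        have "{..<n-1} = {..n-2}" using n3 by auto
        thus ?thesis unfolding S_def a(2) power_sum by simp
      qed
      finally have "g (n - 1) * z ^ S (n - 2) = 1" using pr by simp
      hence "g (n - 1) = iz ^ S (n - 2)" using z0
        by (simp add: power_inverse field_simps)
      thus ?thesis using 3 \<open>gprod n z e m = iz ^ S (n - 2)\<close> by simp
    next
      case 4 thus ?thesis using assms by (simp add: gprod_ge Gset_def)
    qed
  qed
  thus ?thesis using eE by auto
qed

lemma gexp_spec: assumes "g \<in> G" shows "gexp n l z g \<in> Ex" "g = gprod n z (gexp n l z g)"
  using G_exists[OF assms] gexp_unique by auto

lemma gexp_bound: "g \<in> G \<Longrightarrow> gexp n l z g k < l"
  using gexp_spec(1) unfolding Ex_def by auto
lemma gexp_zero: "g \<in> G \<Longrightarrow> k \<ge> n - 1 \<Longrightarrow> gexp n l z g k = 0"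
  using gexp_spec(1) unfolding Ex_def by auto

lemma gprod_mul: "gmul (gprod n z e) (gprod n z e') = gprod n z (\<lambda>k. (e k + e' k) mod l)"
proof
  fix m
  have a: "z ^ ((e m + e' m) mod l) = z ^ e m * z ^ e' m" by (simp add: zpow_mod[symmetric] power_add)
  have b: "iz ^ ((e (m-1) + e' (m-1)) mod l) = iz ^ e (m-1) * iz ^ e' (m-1)" by (simp add: iz_mod[symmetric] power_add)
  show "gmul (gprod n z e) (gprod n z e') m = gprod n z (\<lambda>k. (e k + e' k) mod l) m"
    unfolding gmul_def gprod_eq a b by (auto simp: mult_ac)
qed

lemma gmul_G: assumes "g \<in> G" "h \<in> G" shows "gmul g h \<in> G"
  and "gexp n l z (gmul g h) = (\<lambda>k. (gexp n l z g k + gexp n l z h k) mod l)"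
proof -
  let ?e = "(\<lambda>k. (gexp n l z g k + gexp n l z h k) mod l)"
  have E: "?e \<in> Ex" using gexp_spec(1)[OF assms(1)] gexp_spec(1)[OF assms(2)] l2 unfolding Ex_def by auto
  have eq: "gmul g h = gprod n z ?e" using gprod_mul gexp_spec(2) assms by metis
  show "gmul g h \<in> G" using eq gprod_in_G[OF E] by simp
  show "gexp n l z (gmul g h) = ?e" using gexp_unique[OF E eq] .
qed

lemma gone_G: "gone \<in> G" and gexp_gone: "gexp n l z gone = (\<lambda>_. 0)"
proof -
  have E: "(\<lambda>_. 0) \<in> Ex" unfolding Ex_def using l2 by auto
  have eq: "gone = gprod n z (\<lambda>_. 0)" by (auto simp: gone_def gprod_eq)
  show "gone \<in> G" using gprod_in_G[OF E] eq by simp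
  show "gexp n l z gone = (\<lambda>_. 0)" using gexp_unique[OF E eq] .
qed

lemma gmul_assoc: "gmul (gmul a b) c = gmul a (gmul b c)" by (simp add: gmul_def mult.assoc)
lemma gmul_comm: "gmul a b = gmul b a" by (simp add: gmul_def mult.commute)
lemma gmul_one[simp]: "gmul gone a = a" "gmul a gone = a" by (simp_all add: gmul_def gone_def)

end

context P begin

lemma iz_pow_mod_mult: "iz ^ ((x mod l) * y) = iz ^ (x * y)"
  by (metis iz_mod power_mult)

lemma alpha_prod: "alpha n l z g h = (\<Prod>k<n-2. iz ^ (gexp n l z g k * gexp n l z h (Suc k)))"
  unfolding alpha_def by (simp add: power_sum)

lemma alpha_mul_left: assumes "g \<in> G" "h \<in> G"
  shows "alpha n l z (gmul g h) f = alpha n l z g f * alpha n l z h f"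
proof -
  have "iz ^ (((gexp n l z g k + gexp n l z h k) mod l) * gexp n l z f (Suc k))
     = iz ^ (gexp n l z g k * gexp n l z f (Suc k)) * iz ^ (gexp n l z h k * gexp n l z f (Suc k))" for k
    by (simp add: iz_pow_mod_mult distrib_right power_add)
  thus ?thesis unfolding alpha_prod gmul_G(2)[OF assms] by (simp add: prod.distrib)
qed

lemma alpha_mul_right: assumes "g \<in> G" "h \<in> G"
  shows "alpha n l z f (gmul g h) = alpha n l z f g * alpha n l z f h"
proof -
  have "iz ^ (gexp n l z f k * ((gexp n l z g (Suc k) + gexp n l z h (Suc k)) mod l))
     = iz ^ (gexp n l z f k * gexp n l z g (Suc k)) * iz ^ (gexp n l z f k * gexp n l z h (Suc k))" for k
    by (metis iz_pow_mod_mult mult.commute distrib_right power_add)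
  thus ?thesis unfolding alpha_prod gmul_G(2)[OF assms] by (simp add: prod.distrib)
qed

lemma alpha_one1[simp]: "alpha n l z gone f = 1"
  unfolding alpha_def gexp_gone by simp
lemma alpha_one2[simp]: "alpha n l z f gone = 1"
  unfolding alpha_def gexp_gone by simp

lemma gen_G: "a < n \<Longrightarrow> gen n z a \<in> G"
proof -
  assume a: "a < n"
  have b: "Suc a mod n \<noteq> a" "Suc a mod n < n" using n3 a
    by (cases "Suc a = n"; auto)+
  have pw: "gen n z a m ^ l = 1" for m using zl iz_pow_l unfolding gen_def by auto
  have "(\<Prod>m<n. gen n z a m) = (\<Prod>m<n. (if m = a then z else 1) * (if m = Suc a mod n then iz else 1))"
    unfolding gen_def by (intro prod.cong) (use b in auto)
  also have "\<dots> = z * iz" using a b by (simp add: prod.distrib prod.delta)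
  finally have "(\<Prod>m<n. gen n z a m) = 1" using z0 by simp
  moreover have "m \<ge> n \<Longrightarrow> gen n z a m = 1" for m using a b unfolding gen_def by (auto dest: leD)
  ultimately show ?thesis using pw unfolding Gset_def by auto
qed

lemma gexp_gen: "a < n - 1 \<Longrightarrow> gexp n l z (gen n z a) = (\<lambda>k. if k = a then 1 else 0)"
proof -
  assume a: "a < n - 1"
  have E: "(\<lambda>k. if k = a then 1 else 0) \<in> Ex" unfolding Ex_def using a l2 by auto
  have "gen n z a = gprod n z (\<lambda>k. if k = a then 1 else 0)"
  proof
    fix m show "gen n z a m = gprod n z (\<lambda>k. if k = a then 1 else 0) m"
      using a unfolding gprod_eq gen_eq[OF a] by auto
  qed
  thus ?thesis using gexp_unique[OF E] by simp
qed

lemma gexp_gen_last: "gexp n l z (gen n z (n-1)) = (\<lambda>k. if k < n - 1 then l - 1 else 0)"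
proof -
  have E: "(\<lambda>k. if k < n - 1 then l - 1 else 0) \<in> Ex" unfolding Ex_def using l2 by auto
  have zl1: "z ^ (l - 1) = iz" using zl z0 l2
    by (metis (no_types, lifting) Suc_diff_1 bot_nat_0.not_eq_extremum inverse_unique mult.commute not_numeral_le_zero power_Suc)
  have izl1: "iz ^ (l - 1) = z" using zl1 z0 by (metis inverse_inverse_eq power_inverse)
  have "gen n z (n-1) = gprod n z (\<lambda>k. if k < n - 1 then l - 1 else 0)"
  proof
    fix m show "gen n z (n-1) m = gprod n z (\<lambda>k. if k < n - 1 then l - 1 else 0) m"
      unfolding gprod_eq gen_last using n3 zl1 izl1 z_iz[of "l-1"] zl1
      by (auto simp: z0)
  qed
  thus ?thesis using gexp_unique[OF E] by simp
qed

end

context P begin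

abbreviation "ge \<equiv> gexp n l z"
abbreviation "al \<equiv> alpha n l z"
abbreviation "gn \<equiv> gen n z"

lemma g_val: "g \<in> G \<Longrightarrow> g m = (if m < n - 1 then z ^ ge g m else 1) *
   (if 0 < m \<and> m < n then iz ^ ge g (m - 1) else 1)"
  using gexp_spec(2) gprod_eq by metis

lemma izl1: "iz ^ (l - 1) = z"
proof -
  have "z ^ (l - 1) * z = 1" using zl l2 by (metis Suc_diff_1 less_le_trans numeral_2_eq_2 power_Suc2 zero_less_Suc)
  hence "z ^ (l - 1) = iz" using z0 by (simp add: field_simps)
  thus ?thesis by (metis inverse_inverse_eq power_inverse)
qed

lemma zz4: "z ^ x * (z ^ y * (iz ^ x * iz ^ y)) = 1"
proof -
  have "z ^ x * (z ^ y * (iz ^ x * iz ^ y)) = (z^x * iz^x) * (z^y * iz^y)" by (simp add: mult_ac)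
  thus ?thesis using z_iz by simp
qed

lemma inv_id: assumes g: "g \<in> G" and a: "a < n"
  shows "al g (gn a) = g a * g (Suc a mod n) * al (gn a) g"
proof (cases "a < n - 1")
  case True
  let ?e = "ge g"
  have e0: "?e (n - 1) = 0" using gexp_zero[OF g] by simp
  have A1: "al g (gn a) = (if 0 < a then iz ^ ?e (a - 1) else 1)"
  proof -
    have "al g (gn a) = (\<Prod>k<n-2. if k = a - 1 \<and> 0 < a then iz ^ ?e k else 1)"
      unfolding alpha_prod gexp_gen[OF True] by (intro prod.cong) auto
    also have "\<dots> = (if 0 < a then iz ^ ?e (a - 1) else 1)"
      using True by (cases "0 < a") (auto simp: prod.delta)
    finally show ?thesis .
  qed
  have A2: "al (gn a) g = iz ^ ?e (Suc a)"
  proof -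
    have "al (gn a) g = (\<Prod>k<n-2. if k = a then iz ^ ?e (Suc k) else 1)"
      unfolding alpha_prod gexp_gen[OF True] by (intro prod.cong) auto
    also have "\<dots> = iz ^ ?e (Suc a)"
    proof (cases "a < n - 2")
      case False
      hence "Suc a = n - 1" using True by linarith
      thus ?thesis using False e0 by (simp add: prod.delta)
    qed (simp add: prod.delta)
    finally show ?thesis .
  qed
  have ga: "g a = z ^ ?e a * (if 0 < a then iz ^ ?e (a - 1) else 1)" using g_val[OF g, of a] True a by auto
  have gs: "g (Suc a mod n) = z ^ ?e (Suc a) * iz ^ ?e a"
  proof (cases "Suc a < n - 1")
    case False
    hence h: "Suc a = n - 1" using True by linarith
    have h1: "\<not> Suc a < n - 1" "Suc a < n" "Suc a mod n = Suc a" "?e (Suc a) = 0"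
      using h e0 n3 by auto
    show ?thesis using g_val[OF g, of "Suc a"] h1 by simp
  qed (use g_val[OF g, of "Suc a"] True in auto)
  show ?thesis unfolding A1 A2 ga gs
    using zz4 by (auto simp: mult_ac)
next
  case False
  hence an: "a = n - 1" using a by simp
  let ?e = "ge g"
  have zz: "iz ^ (x * (l - 1)) = z ^ x" for x by (metis izl1 mult.commute power_mult)
  have zz': "iz ^ ((l - 1) * x) = z ^ x" for x by (metis izl1 power_mult)
  have A1: "al g (gn a) = (\<Prod>k<n-2. z ^ ?e k)"
    unfolding alpha_prod an gexp_gen_last by (intro prod.cong) (auto simp: zz[simplified])
  have A2: "al (gn a) g = (\<Prod>k<n-2. z ^ ?e (Suc k))"
    unfolding alpha_prod an gexp_gen_last by (intro prod.cong) (auto simp: zz'[simplified])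
  have g1: "g a = iz ^ ?e (n - 2)" using g_val[OF g, of a] an n3
    by (simp add: numeral_2_eq_2)
  have g0: "g (Suc a mod n) = z ^ ?e 0" using g_val[OF g, of 0] an n3 by simp
  obtain m where m: "n - 2 = m" by simp
  have P1: "(\<Prod>k<Suc m. z ^ ?e k) = (\<Prod>k<m. z ^ ?e k) * z ^ ?e m" by simp
  have P2: "(\<Prod>k<Suc m. z ^ ?e k) = z ^ ?e 0 * (\<Prod>k<m. z ^ ?e (Suc k))" by (rule prod.lessThan_Suc_shift)
  have "(\<Prod>k<m. z ^ ?e k) = ((\<Prod>k<m. z ^ ?e k) * z ^ ?e m) * iz ^ ?e m"
    using z_iz[of "?e m"] by (simp add: mult.assoc)
  also have "\<dots> = iz ^ ?e m * z ^ ?e 0 * (\<Prod>k<m. z ^ ?e (Suc k))"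
    using P1 P2 by (simp add: mult_ac)
  finally show ?thesis unfolding A1 A2 g1 g0 m .
qed

end

context P begin

type_synonym st = "(nat \<Rightarrow> nat) \<times> grp"
type_synonym vec = "st \<Rightarrow> complex"

definition chi :: "grp \<Rightarrow> (nat \<Rightarrow> nat) \<Rightarrow> complex" where
  "chi g p = (\<Prod>i<n. g i ^ p i)"

definition qn :: "nat \<Rightarrow> complex" where "qn k = (\<Sum>a<k. z ^ a)"
definition qn' :: "nat \<Rightarrow> complex" where "qn' k = (\<Sum>a<k. iz ^ a)"

definition TG :: "grp \<Rightarrow> vec \<Rightarrow> vec" where
  "TG g \<phi> = (\<lambda>(p, f). if f \<in> G then chi g p * al g f * \<phi> (p, gmul g f) else 0)"

definition TX :: "nat \<Rightarrow> vec \<Rightarrow> vec" where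
  "TX j \<phi> = (\<lambda>(p, f). if f \<in> G then
      \<phi> (p(j := Suc (p j)), f)
    + (if 0 < j then - t (j - 1) * qn (p (j - 1)) * iz ^ p j * al (gn (j - 1)) f *
          \<phi> (p(j - 1 := p (j - 1) - 1), gmul (gn (j - 1)) f) else 0)
    + (if j = n - 1 then t (n - 1) * qn' (p 0) * z ^ p (n - 1) * al (gn (n - 1)) f *
          \<phi> (p(0 := p 0 - 1), gmul (gn (n - 1)) f) else 0)
    else 0)"

lemma TG_simp: "TG g \<phi> (p, f) = (if f \<in> G then chi g p * al g f * \<phi> (p, gmul g f) else 0)"
  by (simp add: TG_def)

lemma TX_simp: "TX j \<phi> (p, f) = (if f \<in> G then
      \<phi> (p(j := Suc (p j)), f)
    + (if 0 < j then - t (j - 1) * qn (p (j - 1)) * iz ^ p j * al (gn (j - 1)) f *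
          \<phi> (p(j - 1 := p (j - 1) - 1), gmul (gn (j - 1)) f) else 0)
    + (if j = n - 1 then t (n - 1) * qn' (p 0) * z ^ p (n - 1) * al (gn (n - 1)) f *
          \<phi> (p(0 := p 0 - 1), gmul (gn (n - 1)) f) else 0)
    else 0)"
  by (simp add: TX_def)

lemma chi_inc: "j < n \<Longrightarrow> chi g (p(j := Suc (p j))) = g j * chi g p"
proof -
  assume j: "j < n"
  have "chi g (p(j := Suc (p j))) = (\<Prod>i<n. (if i = j then g j else 1) * g i ^ p i)"
    unfolding chi_def by (intro prod.cong) auto
  also have "\<dots> = g j * chi g p" using j by (simp add: prod.distrib chi_def prod.delta)
  finally show ?thesis .
qed

lemma chi_dec: "k < n \<Longrightarrow> 0 < p k \<Longrightarrow> g k * chi g (p(k := p k - 1)) = chi g p"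
proof -
  assume k: "k < n" "0 < p k"
  have e: "p = (p(k := p k - 1))(k := Suc ((p(k := p k - 1)) k))" using k by auto
  show ?thesis by (subst (2) e, subst chi_inc) (use k in auto)
qed

lemma chi_mul: "chi (gmul g h) p = chi g p * chi h p"
  unfolding chi_def gmul_def by (simp add: power_mult_distrib prod.distrib)

lemma qn_0[simp]: "qn 0 = 0" and qn'_0[simp]: "qn' 0 = 0" by (simp_all add: qn_def qn'_def)

lemma G_gmul: "g \<in> G \<Longrightarrow> f \<in> G \<Longrightarrow> gmul g f \<in> G" using gmul_G(1) by blast

lemma E1: assumes "g \<in> G" "h \<in> G" shows "TG h (TG g \<phi>) = (\<lambda>s. al g h * TG (gmul g h) \<phi> s)"
proof
  fix s :: st
  obtain p f where s: "s = (p, f)" by fastforce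
  show "TG h (TG g \<phi>) s = al g h * TG (gmul g h) \<phi> s"
  proof (cases "f \<in> G")
    case True
    have a1: "al g (gmul h f) = al g h * al g f" using alpha_mul_right assms True by blast
    have a2: "al (gmul g h) f = al g f * al h f" using alpha_mul_left assms by blast
    have gm: "gmul g (gmul h f) = gmul (gmul g h) f" by (simp add: gmul_assoc)
    show ?thesis unfolding s TG_simp using True G_gmul[OF assms(2) True]
      by (simp add: a1 a2 gm chi_mul mult_ac)
  qed (simp add: s TG_simp)
qed

end

context P begin

lemma E2: assumes g: "g \<in> G" and j: "j < n" shows "TX j (TG g \<phi>) = (\<lambda>s. g j * TG g (TX j \<phi>) s)"
proof
  fix s :: st
  obtain p f where s: "s = (p, f)" by fastforce
  show "TX j (TG g \<phi>) s = g j * TG g (TX j \<phi>) s"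
  proof (cases "f \<in> G")
    case f: True
    have gf: "gmul g f \<in> G" using G_gmul g f by blast
    have T1: "TG g \<phi> (p(j := Suc (p j)), f) = g j * (chi g p * al g f * \<phi> (p(j := Suc (p j)), gmul g f))"
      using f j by (simp add: TG_simp chi_inc)
    define p1 where "p1 = p(j - 1 := p (j - 1) - 1)"
    have T2: "(if 0 < j then - t (j - 1) * qn (p (j - 1)) * iz ^ p j * al (gn (j - 1)) f *
          TG g \<phi> (p1, gmul (gn (j - 1)) f) else 0)
       = g j * (chi g p * al g f * (if 0 < j then - t (j - 1) * qn (p (j - 1)) * iz ^ p j * al (gn (j - 1)) (gmul g f) *
          \<phi> (p1, gmul (gn (j - 1)) (gmul g f)) else 0))"
    proof (cases "0 < j \<and> 0 < p (j - 1)")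
      case True
      have gG: "gn (j - 1) \<in> G" using gen_G j by simp
      have sm: "Suc (j - 1) mod n = j" using True j by simp
      have iv: "al g (gn (j - 1)) = g (j - 1) * g j * al (gn (j - 1)) g"
        using inv_id[OF g, of "j - 1"] j sm by simp
      have cd: "g (j - 1) * chi g p1 = chi g p" unfolding p1_def using chi_dec j True by simp
      have a1: "al g (gmul (gn (j - 1)) f) = al g (gn (j - 1)) * al g f" using alpha_mul_right gG f by blast
      have a2: "al (gn (j - 1)) (gmul g f) = al (gn (j - 1)) g * al (gn (j - 1)) f" using alpha_mul_right g f by blast
      have gm: "gmul g (gmul (gn (j - 1)) f) = gmul (gn (j - 1)) (gmul g f)"
        by (metis gmul_assoc gmul_comm)
      have "chi g p1 * al g (gmul (gn (j - 1)) f) = g j * (chi g p * al g f) * al (gn (j - 1)) g"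
        unfolding a1 iv cd[symmetric] by (simp add: mult_ac)
      thus ?thesis using True G_gmul[OF gG f] by (simp add: TG_simp gm[simplified] a2[simplified] mult_ac)
    qed auto
    define p2 where "p2 = p(0 := p 0 - 1)"
    have T3: "(if j = n - 1 then t (n - 1) * qn' (p 0) * z ^ p (n - 1) * al (gn (n - 1)) f *
          TG g \<phi> (p2, gmul (gn (n - 1)) f) else 0)
       = g j * (chi g p * al g f * (if j = n - 1 then t (n - 1) * qn' (p 0) * z ^ p (n - 1) * al (gn (n - 1)) (gmul g f) *
          \<phi> (p2, gmul (gn (n - 1)) (gmul g f)) else 0))"
    proof (cases "j = n - 1 \<and> 0 < p 0")
      case True
      have gG: "gn (n - 1) \<in> G" using gen_G n3 by simp
      have sm: "Suc (n - 1) mod n = 0" using n3 by simp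
      have iv: "al g (gn (n - 1)) = g (n - 1) * g 0 * al (gn (n - 1)) g"
        using inv_id[OF g, of "n - 1"] n3 sm by simp
      have cd: "g 0 * chi g p2 = chi g p" unfolding p2_def using chi_dec n3 True by simp
      have a1: "al g (gmul (gn (n - 1)) f) = al g (gn (n - 1)) * al g f" using alpha_mul_right gG f by blast
      have a2: "al (gn (n - 1)) (gmul g f) = al (gn (n - 1)) g * al (gn (n - 1)) f" using alpha_mul_right g f by blast
      have gm: "gmul g (gmul (gn (n - 1)) f) = gmul (gn (n - 1)) (gmul g f)"
        by (metis gmul_assoc gmul_comm)
      have "chi g p2 * al g (gmul (gn (n - 1)) f) = g (n - 1) * (chi g p * al g f) * al (gn (n - 1)) g"
        unfolding a1 iv cd[symmetric] by (simp add: mult_ac)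
      thus ?thesis using True G_gmul[OF gG f] by (simp add: TG_simp gm[simplified] a2[simplified] mult_ac)
    qed auto
    have L: "TX j (TG g \<phi>) (p, f) = TG g \<phi> (p(j := Suc (p j)), f) + (if 0 < j then - t (j - 1) * qn (p (j - 1)) * iz ^ p j * al (gn (j - 1)) f *
          TG g \<phi> (p1, gmul (gn (j - 1)) f) else 0) + (if j = n - 1 then t (n - 1) * qn' (p 0) * z ^ p (n - 1) * al (gn (n - 1)) f *
          TG g \<phi> (p2, gmul (gn (n - 1)) f) else 0)"
      using f unfolding p1_def p2_def by (simp only: TX_simp if_True)
    have R: "TG g (TX j \<phi>) (p, f) = chi g p * al g f * (\<phi> (p(j := Suc (p j)), gmul g f) + (if 0 < j then - t (j - 1) * qn (p (j - 1)) * iz ^ p j * al (gn (j - 1)) (gmul g f) *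
          \<phi> (p1, gmul (gn (j - 1)) (gmul g f)) else 0) + (if j = n - 1 then t (n - 1) * qn' (p 0) * z ^ p (n - 1) * al (gn (n - 1)) (gmul g f) *
          \<phi> (p2, gmul (gn (n - 1)) (gmul g f)) else 0))"
      using f gf unfolding p1_def p2_def by (simp only: TX_simp TG_simp if_True)
    show ?thesis unfolding s L R T1 T2 T3 by (simp only: distrib_left)
  qed (simp add: s TG_simp TX_simp)
qed

end

context P begin

definition inc :: "nat \<Rightarrow> (nat \<Rightarrow> nat) \<Rightarrow> (nat \<Rightarrow> nat)" where "inc j p = p(j := Suc (p j))"
definition dec :: "nat \<Rightarrow> (nat \<Rightarrow> nat) \<Rightarrow> (nat \<Rightarrow> nat)" where "dec j p = p(j := p j - 1)"

definition Ac :: "nat \<Rightarrow> (nat \<Rightarrow> nat) \<Rightarrow> grp \<Rightarrow> complex" where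
  "Ac j p f = (if 0 < j then - t (j - 1) * qn (p (j - 1)) * iz ^ p j * al (gn (j - 1)) f else 0)"
definition Bc :: "nat \<Rightarrow> (nat \<Rightarrow> nat) \<Rightarrow> grp \<Rightarrow> complex" where
  "Bc j p f = (if j = n - 1 then t (n - 1) * qn' (p 0) * z ^ p (n - 1) * al (gn (n - 1)) f else 0)"

lemma TX_exp: "f \<in> G \<Longrightarrow> TX j \<phi> (p, f) = \<phi> (inc j p, f)
   + Ac j p f * \<phi> (dec (j - 1) p, gmul (gn (j - 1)) f)
   + Bc j p f * \<phi> (dec 0 p, gmul (gn (n - 1)) f)"
  unfolding TX_simp Ac_def Bc_def inc_def dec_def
  by (cases "0 < j"; cases "j = n - 1"; simp only: if_True if_False mult_zero_left add_0_right simp_thms)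

lemma gnG: "j < n \<Longrightarrow> gn (j - 1) \<in> G" "gn (n - 1) \<in> G" "j < n \<Longrightarrow> gn j \<in> G"
  using gen_G n3 by auto

lemma TXX_exp: assumes f: "f \<in> G" and i: "i < n" shows "TX i (TX j \<phi>) (p, f) =
    \<phi> (inc j (inc i p), f)
  + Ac j (inc i p) f * \<phi> (dec (j - 1) (inc i p), gmul (gn (j - 1)) f)
  + Bc j (inc i p) f * \<phi> (dec 0 (inc i p), gmul (gn (n - 1)) f)
  + Ac i p f * (\<phi> (inc j (dec (i - 1) p), gmul (gn (i - 1)) f)
     + Ac j (dec (i - 1) p) (gmul (gn (i - 1)) f) * \<phi> (dec (j - 1) (dec (i - 1) p), gmul (gn (j - 1)) (gmul (gn (i - 1)) f))
     + Bc j (dec (i - 1) p) (gmul (gn (i - 1)) f) * \<phi> (dec 0 (dec (i - 1) p), gmul (gn (n - 1)) (gmul (gn (i - 1)) f)))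
  + Bc i p f * (\<phi> (inc j (dec 0 p), gmul (gn (n - 1)) f)
     + Ac j (dec 0 p) (gmul (gn (n - 1)) f) * \<phi> (dec (j - 1) (dec 0 p), gmul (gn (j - 1)) (gmul (gn (n - 1)) f))
     + Bc j (dec 0 p) (gmul (gn (n - 1)) f) * \<phi> (dec 0 (dec 0 p), gmul (gn (n - 1)) (gmul (gn (n - 1)) f)))"
proof -
  have g1: "gmul (gn (i - 1)) f \<in> G" "gmul (gn (n - 1)) f \<in> G" using G_gmul gnG f i by auto
  show ?thesis unfolding TX_exp[OF f] TX_exp[OF g1(1)] TX_exp[OF g1(2)] by (simp add: algebra_simps)
qed

lemma al_gen1: "a < n - 1 \<Longrightarrow> b < n - 1 \<Longrightarrow> al (gn a) (gn b) = (if b = Suc a then iz else 1)"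
proof -
  assume a: "a < n - 1" and b: "b < n - 1"
  have "al (gn a) (gn b) = (\<Prod>k<n-2. if k = a \<and> b = Suc a then iz else 1)"
    unfolding alpha_prod gexp_gen[OF a] gexp_gen[OF b] by (intro prod.cong) auto
  also have "\<dots> = (if b = Suc a then iz else 1)" using a b by (cases "b = Suc a") (auto simp: prod.delta)
  finally show ?thesis .
qed

lemma al_gen2: "a < n - 1 \<Longrightarrow> al (gn a) (gn (n - 1)) = (if a < n - 2 then z else 1)"
proof -
  assume a: "a < n - 1"
  have "al (gn a) (gn (n - 1)) = (\<Prod>k<n-2. if k = a then z else 1)"
    unfolding alpha_prod gexp_gen[OF a] gexp_gen_last by (intro prod.cong) (auto simp: izl1[simplified])
  also have "\<dots> = (if a < n - 2 then z else 1)" by (simp add: prod.delta)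
  finally show ?thesis .
qed

lemma al_gen3: "b < n - 1 \<Longrightarrow> al (gn (n - 1)) (gn b) = (if 0 < b then z else 1)"
proof -
  assume b: "b < n - 1"
  have "al (gn (n - 1)) (gn b) = (\<Prod>k<n-2. if k = b - 1 \<and> 0 < b then z else 1)"
    unfolding alpha_prod gexp_gen[OF b] gexp_gen_last by (intro prod.cong) (auto simp: izl1[simplified])
  also have "\<dots> = (if 0 < b then z else 1)" using b by (cases "0 < b") (auto simp: prod.delta)
  finally show ?thesis .
qed

lemma chi_gen: assumes a: "a < n" shows "chi (gn a) p = z ^ p a * iz ^ p (Suc a mod n)"
proof -
  have b: "Suc a mod n \<noteq> a" "Suc a mod n < n" using n3 a by (cases "Suc a = n"; auto)+
  have "chi (gn a) p = (\<Prod>m<n. (if m = a then z ^ p a else 1) * (if m = Suc a mod n then iz ^ p (Suc a mod n) else 1))"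
    unfolding chi_def gen_def by (intro prod.cong) (use b in auto)
  also have "\<dots> = z ^ p a * iz ^ p (Suc a mod n)" using a b by (simp add: prod.distrib prod.delta)
  finally show ?thesis .
qed

lemma qn_Suc: "qn (Suc k) = qn k + z ^ k" by (simp add: qn_def)
lemma qn'_Suc: "qn' (Suc k) = qn' k + iz ^ k" by (simp add: qn'_def)
lemma qn'_qn: "qn' (Suc k) = iz ^ k * qn (Suc k)"
proof (induction k)
  case (Suc k)
  have "qn' (Suc (Suc k)) = iz ^ k * qn (Suc k) + iz ^ Suc k" using Suc qn'_Suc by simp
  also have "\<dots> = iz ^ Suc k * (z * qn (Suc k) + 1)" using z0 by (simp add: field_simps)
  also have "z * qn (Suc k) + 1 = qn (Suc (Suc k))"
  proof -
    have "z * qn (Suc k) = (\<Sum>a<Suc k. z ^ Suc a)" by (simp add: qn_def sum_distrib_left distrib_left)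
    thus ?thesis unfolding qn_def by (simp only: sum.lessThan_Suc_shift[of _ "Suc k"]) simp
  qed
  finally show ?case .
qed (simp add: qn_def qn'_def)

lemma qn_ident: "qn p * qn' (p - 1) = z * qn' p * qn (p - 1)"
proof (cases p)
  case (Suc k)
  show ?thesis
  proof (cases k)
    case (Suc m)
    have zi: "z ^ x * iz ^ x = 1" for x by (rule z_iz)
    have h1: "qn (Suc (Suc m)) = z ^ Suc m * qn' (Suc (Suc m))"
      unfolding qn'_qn[of "Suc m"] mult.assoc[symmetric] zi by simp
    have h2: "qn (Suc m) = z ^ m * qn' (Suc m)"
      unfolding qn'_qn[of m] mult.assoc[symmetric] zi by simp
    show ?thesis using \<open>p = Suc k\<close> Suc by (simp add: h1 h2 mult_ac)
  qed (simp add: \<open>p = Suc k\<close>)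
qed simp

end

context P begin

lemma n1_ne0: "n - 1 \<noteq> 0" "n - 2 \<noteq> 0" "n - 1 < n" "0 < n - 1" "n - 2 < n - 1" "0 < n" using n3 by auto

lemma relB: "TX 0 (TX (n - 1) \<phi>) s - TX (n - 1) (TX 0 \<phi>) s = t (n - 1) * TG (gn (n - 1)) \<phi> s"
proof -
  obtain p f where s: "s = (p, f)" by fastforce
  show ?thesis
  proof (cases "f \<in> G")
    case f: True
    let ?N = "gmul (gn (n - 1)) f"
    have e1: "TX 0 (TX (n - 1) \<phi>) (p, f) = \<phi> (inc (n - 1) (inc 0 p), f)
      + Ac (n - 1) (inc 0 p) f * \<phi> (dec (n - 1 - 1) (inc 0 p), gmul (gn (n - 1 - 1)) f)
      + Bc (n - 1) (inc 0 p) f * \<phi> (dec 0 (inc 0 p), ?N)"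
      unfolding TXX_exp[OF f n1_ne0(6)] using n1_ne0 n3 by (simp add: Ac_def Bc_def)
    have e2: "TX (n - 1) (TX 0 \<phi>) (p, f) = \<phi> (inc 0 (inc (n - 1) p), f)
      + Ac (n - 1) p f * \<phi> (inc 0 (dec (n - 1 - 1) p), gmul (gn (n - 1 - 1)) f)
      + Bc (n - 1) p f * \<phi> (inc 0 (dec 0 p), ?N)"
      unfolding TXX_exp[OF f n1_ne0(3)] using n1_ne0 by (simp add: Ac_def Bc_def)
    have s1: "inc 0 (inc (n - 1) p) = inc (n - 1) (inc 0 p)" "dec (n - 1 - 1) (inc 0 p) = inc 0 (dec (n - 1 - 1) p)"
      "dec 0 (inc 0 p) = p"
      using n1_ne0 by (auto simp: inc_def dec_def fun_eq_iff)
    have a1: "Ac (n - 1) (inc 0 p) f = Ac (n - 1) p f"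
      using n1_ne0 by (simp add: Ac_def inc_def)
    have b1: "Bc (n - 1) (inc 0 p) f * \<phi> (p, ?N) - Bc (n - 1) p f * \<phi> (inc 0 (dec 0 p), ?N)
       = t (n - 1) * (z ^ p (n - 1) * iz ^ p 0 * al (gn (n - 1)) f * \<phi> (p, ?N))"
    proof (cases "p 0")
      case 0 thus ?thesis using n1_ne0 by (simp add: Bc_def inc_def qn'_def)
    next
      case (Suc k)
      have "inc 0 (dec 0 p) = p" using Suc by (auto simp: inc_def dec_def fun_eq_iff)
      moreover have "(inc 0 p) (n - 1) = p (n - 1)" "(inc 0 p) 0 = Suc (p 0)" using n1_ne0 by (auto simp: inc_def)
      ultimately show ?thesis using n1_ne0 by (simp add: Bc_def qn'_Suc algebra_simps)
    qed
    have tg: "TG (gn (n - 1)) \<phi> (p, f) = z ^ p (n - 1) * iz ^ p 0 * al (gn (n - 1)) f * \<phi> (p, ?N)"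
      using f n3 by (simp add: TG_simp chi_gen)
    show ?thesis unfolding s e1 e2 s1 a1 tg using b1 by (simp add: algebra_simps)
  qed (simp add: s TX_simp TG_simp)
qed

end

context P begin

lemma Ac0[simp]: "Ac 0 p f = 0" by (simp add: Ac_def)
lemma Bc_ne[simp]: "j \<noteq> n - 1 \<Longrightarrow> Bc j p f = 0" by (simp add: Bc_def)

lemma incdec: "i \<noteq> j \<Longrightarrow> inc i (inc j p) = inc j (inc i p)" "i \<noteq> j \<Longrightarrow> dec i (inc j p) = inc j (dec i p)"
  "dec i (dec j p) = dec j (dec i p)" "dec i (inc i p) = p" "0 < p i \<Longrightarrow> inc i (dec i p) = p"
  by (auto simp: inc_def dec_def fun_eq_iff)

lemma inc_other[simp]: "i \<noteq> j \<Longrightarrow> inc i p j = p j" "inc i p i = Suc (p i)"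
  and dec_other[simp]: "i \<noteq> j \<Longrightarrow> dec i p j = p j" "dec i p i = p i - 1"
  by (auto simp: inc_def dec_def)

lemma gm_comm: "gmul a (gmul b f) = gmul b (gmul a f)" by (metis gmul_assoc gmul_comm)

lemma relA0: "TX 1 (TX 0 \<phi>) s - TX 0 (TX 1 \<phi>) s = t 0 * TG (gn 0) \<phi> s"
proof -
  obtain p f where s: "s = (p, f)" by fastforce
  have n1: "1 \<noteq> n - 1" "1 < n" "0 < n" "0 < n - 1" using n3 by auto
  show ?thesis
  proof (cases "f \<in> G")
    case f: True
    have e1: "TX 1 (TX 0 \<phi>) (p, f) = \<phi> (inc 0 (inc 1 p), f)
      + Ac 1 p f * \<phi> (inc 0 (dec 0 p), gmul (gn 0) f)"
      unfolding TXX_exp[OF f n1(2)] using n1 by simp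
    have e2: "TX 0 (TX 1 \<phi>) (p, f) = \<phi> (inc 1 (inc 0 p), f)
      + Ac 1 (inc 0 p) f * \<phi> (dec 0 (inc 0 p), gmul (gn 0) f)"
      unfolding TXX_exp[OF f n1(3)] using n1 by simp
    have c: "Ac 1 p f * \<phi> (inc 0 (dec 0 p), gmul (gn 0) f) - Ac 1 (inc 0 p) f * \<phi> (dec 0 (inc 0 p), gmul (gn 0) f)
      = t 0 * (z ^ p 0 * iz ^ p 1 * al (gn 0) f * \<phi> (p, gmul (gn 0) f))"
    proof (cases "p 0")
      case 0 thus ?thesis by (simp add: Ac_def incdec qn_def)
    next
      case (Suc k) thus ?thesis by (simp add: Ac_def incdec qn_Suc algebra_simps)
    qed
    have tg: "TG (gn 0) \<phi> (p, f) = z ^ p 0 * iz ^ p 1 * al (gn 0) f * \<phi> (p, gmul (gn 0) f)"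
      using f n3 by (simp add: TG_simp chi_gen)
    have ii: "inc 0 (inc 1 p) = inc 1 (inc 0 p)" by (simp add: incdec)
    show ?thesis unfolding s e1 e2 tg ii using c by (simp add: algebra_simps)
  qed (simp add: s TX_simp TG_simp)
qed

end

context P begin

lemma rel_comb: fixes x a2 b aj c ai dd bj e bi ff ajinc g ajk bjk T :: complex
  assumes "aj*c - ajinc*g = T" "aj*ai = a2*ajk" "bj*bi = a2*bjk"
  shows "x + a2*b + aj*(c + ai*dd) + bj*(e + bi*ff) - (x + ajinc*g + bj*e + a2*(b + ajk*dd + bjk*ff)) = T"
proof -
  have "x + a2*b + aj*(c + ai*dd) + bj*(e + bi*ff) - (x + ajinc*g + bj*e + a2*(b + ajk*dd + bjk*ff))
    = (aj*c - ajinc*g) + (aj*ai - a2*ajk)*dd + (bj*bi - a2*bjk)*ff" by (simp add: algebra_simps)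
  thus ?thesis using assms by simp
qed

lemma relA: assumes ij: "Suc (Suc k) < n"
  shows "TX (Suc (Suc k)) (TX (Suc k) \<phi>) s - TX (Suc k) (TX (Suc (Suc k)) \<phi>) s = t (Suc k) * TG (gn (Suc k)) \<phi> s"
proof -
  define i where "i = Suc k"
  define j where "j = Suc i"
  have ij': "j < n" "i < n" "i \<noteq> n - 1" "k < n - 1" "i < n - 1" "i \<noteq> 0" "j - 1 = i" "i - 1 = k" "k \<noteq> i" "k \<noteq> j" "i \<noteq> j" "0 < j"
    using ij unfolding i_def j_def by auto
  obtain p f where s: "s = (p, f)" by fastforce
  show ?thesis unfolding i_def[symmetric] j_def[symmetric]
  proof (cases "f \<in> G")
    case f: True
    let ?gi = "gmul (gn i) f" and ?gk = "gmul (gn k) f" and ?gN = "gmul (gn (n - 1)) f"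
    have gG: "gn i \<in> G" "gn k \<in> G" "gn (n - 1) \<in> G" using ij' gnG by auto
    have e1: "TX j (TX i \<phi>) (p, f) = \<phi> (inc i (inc j p), f)
      + Ac i (inc j p) f * \<phi> (dec k (inc j p), ?gk)
      + Ac j p f * (\<phi> (inc i (dec i p), ?gi) + Ac i (dec i p) ?gi * \<phi> (dec k (dec i p), gmul (gn k) ?gi))
      + Bc j p f * (\<phi> (inc i (dec 0 p), ?gN) + Ac i (dec 0 p) ?gN * \<phi> (dec k (dec 0 p), gmul (gn k) ?gN))"
      unfolding TXX_exp[OF f ij'(1)] using ij' by simp
    have e2: "TX i (TX j \<phi>) (p, f) = \<phi> (inc j (inc i p), f)
      + Ac j (inc i p) f * \<phi> (dec i (inc i p), ?gi)
      + Bc j (inc i p) f * \<phi> (dec 0 (inc i p), ?gN)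
      + Ac i p f * (\<phi> (inc j (dec k p), ?gk) + Ac j (dec k p) ?gk * \<phi> (dec i (dec k p), gmul (gn i) ?gk)
          + Bc j (dec k p) ?gk * \<phi> (dec 0 (dec k p), gmul (gn (n - 1)) ?gk))"
      unfolding TXX_exp[OF f ij'(2)] using ij' by simp
    have a: "inc i (inc j p) = inc j (inc i p)" using ij' by (simp add: incdec)
    have b: "Ac i (inc j p) f = Ac i p f" "dec k (inc j p) = inc j (dec k p)"
      using ij' by (auto simp: Ac_def incdec)
    have c: "Ac j p f * \<phi> (inc i (dec i p), ?gi) - Ac j (inc i p) f * \<phi> (dec i (inc i p), ?gi)
      = t i * (z ^ p i * iz ^ p j * al (gn i) f * \<phi> (p, ?gi))"
    proof (cases "p i")
      case 0 thus ?thesis using ij' by (simp add: Ac_def incdec qn_def)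
    next
      case (Suc m) thus ?thesis using ij' by (simp add: Ac_def incdec qn_Suc algebra_simps)
    qed
    have d: "Ac j p f * Ac i (dec i p) ?gi = Ac i p f * Ac j (dec k p) ?gk"
    proof (cases "p i")
      case 0 thus ?thesis using ij' by (simp add: Ac_def)
    next
      case (Suc m)
      have al1: "al (gn k) ?gi = iz * al (gn k) f" using alpha_mul_right[OF gG(1) f, of "gn k"] al_gen1[of k i] ij' i_def by simp
      have al2: "al (gn i) ?gk = al (gn i) f" using alpha_mul_right[OF gG(2) f, of "gn i"] al_gen1[of i k] ij' i_def by simp
      show ?thesis using ij' Suc by (simp add: Ac_def al1 al2 algebra_simps)
    qed
    have dd: "dec k (dec i p) = dec i (dec k p)" "gmul (gn k) ?gi = gmul (gn i) ?gk" by (simp_all add: incdec gm_comm)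
    have e: "Bc j (inc i p) f = Bc j p f" "dec 0 (inc i p) = inc i (dec 0 p)"
      using ij' by (auto simp: Bc_def incdec)
    have ff: "Bc j p f * Ac i (dec 0 p) ?gN = Ac i p f * Bc j (dec k p) ?gk"
    proof (cases "j = n - 1")
      case jn: True
      have kn: "k < n - 2" using jn ij' i_def j_def by auto
      have al1: "al (gn k) ?gN = z * al (gn k) f" using alpha_mul_right[OF gG(3) f, of "gn k"] al_gen2[of k] ij' kn by simp
      have al2: "al (gn (n - 1)) ?gk = (if 0 < k then z else 1) * al (gn (n - 1)) f"
        using alpha_mul_right[OF gG(2) f, of "gn (n - 1)"] al_gen3[of k] ij' by simp
      show ?thesis
      proof (cases "k = 0")
        case True
        have q: "qn' (p 0) * qn (p 0 - 1) * z = qn (p 0) * qn' (p 0 - 1)" using qn_ident[of "p 0"] by (simp add: mult_ac)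
        have "i = 1" using True i_def by simp
        have al1': "al (gn 0) (gmul (gn (n - 1)) f) = z * al (gn 0) f" using al1 True by simp
        have al2': "al (gn (n - 1)) (gmul (gn 0) f) = al (gn (n - 1)) f" using al2 True by simp
        show ?thesis using jn True ij' n1_ne0 q[symmetric] al1' al2' \<open>i = 1\<close> by (simp add: Ac_def Bc_def algebra_simps)
      next
        case False
        thus ?thesis using jn ij' n1_ne0 al1 al2 by (simp add: Ac_def Bc_def algebra_simps)
      qed
    qed (simp add: Bc_def)
    have fs: "dec k (dec 0 p) = dec 0 (dec k p)" "gmul (gn k) ?gN = gmul (gn (n - 1)) ?gk" by (simp_all add: incdec gm_comm)
    have tg: "TG (gn i) \<phi> (p, f) = z ^ p i * iz ^ p j * al (gn i) f * \<phi> (p, ?gi)"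
      using f ij' by (simp add: TG_simp chi_gen j_def)
    have "TX j (TX i \<phi>) (p, f) - TX i (TX j \<phi>) (p, f) = t i * TG (gn i) \<phi> (p, f)"
      unfolding e1 e2 a b e dd fs tg by (rule rel_comb[OF c d ff])
    thus "TX j (TX i \<phi>) s - TX i (TX j \<phi>) s = t i * TG (gn i) \<phi> s" unfolding s .
  qed (simp add: s TX_simp TG_simp)
qed

end

context P begin

lemma rel_comb2: fixes x a1 s1 aj y1 ai' w1 bj y2 bi' w2 ajinc s2 bjinc s3 ai y1' ajk bjk :: complex
  assumes "a1*s1 = ai*y1'" "ajinc*s2 = aj*y1" "bjinc*s3 = bj*y2" "aj*ai' = ai*ajk" "bj*bi' = ai*bjk"
  shows "x + a1*s1 + aj*(y1 + ai'*w1) + bj*(y2 + bi'*w2) = x + ajinc*s2 + bjinc*s3 + ai*(y1' + ajk*w1 + bjk*w2)"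
proof -
  have "x + a1*s1 + aj*(y1 + ai'*w1) + bj*(y2 + bi'*w2) = x + a1*s1 + aj*y1 + (aj*ai')*w1 + bj*y2 + (bj*bi')*w2"
    by (simp add: algebra_simps)
  also have "\<dots> = x + ajinc*s2 + bjinc*s3 + ai*(y1' + ajk*w1 + bjk*w2)"
    unfolding assms by (simp add: algebra_simps)
  finally show ?thesis .
qed

lemma relC_lt: assumes ij: "i + 2 \<le> j" "j < n" "\<not> (i = 0 \<and> j = n - 1)"
  shows "TX j (TX i \<phi>) s = TX i (TX j \<phi>) s"
proof -
  obtain p f where s: "s = (p, f)" by fastforce
  have i': "i < n" "i \<noteq> n - 1" "i \<noteq> j" "i - 1 \<noteq> j" "i \<noteq> j - 1" "j - 1 \<noteq> i - 1" "j \<noteq> i - 1" using ij by auto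
  show ?thesis
  proof (cases "f \<in> G")
    case f: True
    let ?a = "i - 1" and ?b = "j - 1"
    let ?ga = "gmul (gn ?a) f" and ?gb = "gmul (gn ?b) f" and ?gN = "gmul (gn (n - 1)) f"
    have gG: "gn ?a \<in> G" "gn ?b \<in> G" "gn (n - 1) \<in> G" using i' ij gnG by auto
    have e1: "TX j (TX i \<phi>) (p, f) = \<phi> (inc i (inc j p), f)
      + Ac i (inc j p) f * \<phi> (dec ?a (inc j p), ?ga)
      + Ac j p f * (\<phi> (inc i (dec ?b p), ?gb) + Ac i (dec ?b p) ?gb * \<phi> (dec ?a (dec ?b p), gmul (gn ?a) ?gb))
      + Bc j p f * (\<phi> (inc i (dec 0 p), ?gN) + Ac i (dec 0 p) ?gN * \<phi> (dec ?a (dec 0 p), gmul (gn ?a) ?gN))"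
      unfolding TXX_exp[OF f ij(2)] using i' by simp
    have e2: "TX i (TX j \<phi>) (p, f) = \<phi> (inc j (inc i p), f)
      + Ac j (inc i p) f * \<phi> (dec ?b (inc i p), ?gb)
      + Bc j (inc i p) f * \<phi> (dec 0 (inc i p), ?gN)
      + Ac i p f * (\<phi> (inc j (dec ?a p), ?ga) + Ac j (dec ?a p) ?ga * \<phi> (dec ?b (dec ?a p), gmul (gn ?b) ?ga)
          + Bc j (dec ?a p) ?ga * \<phi> (dec 0 (dec ?a p), gmul (gn (n - 1)) ?ga))"
      unfolding TXX_exp[OF f i'(1)] using i' by simp
    have st: "inc i (inc j p) = inc j (inc i p)" "dec ?a (dec ?b p) = dec ?b (dec ?a p)"
      "gmul (gn ?a) ?gb = gmul (gn ?b) ?ga" "dec ?a (dec 0 p) = dec 0 (dec ?a p)" "gmul (gn ?a) ?gN = gmul (gn (n - 1)) ?ga"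
      using i' by (simp_all add: incdec gm_comm)
    have c1: "Ac i (inc j p) f * \<phi> (dec ?a (inc j p), ?ga) = Ac i p f * \<phi> (inc j (dec ?a p), ?ga)"
      using i' by (simp add: Ac_def incdec)
    have c2: "Ac j (inc i p) f * \<phi> (dec ?b (inc i p), ?gb) = Ac j p f * \<phi> (inc i (dec ?b p), ?gb)"
      using i' ij by (simp add: Ac_def incdec)
    have c3: "Bc j (inc i p) f * \<phi> (dec 0 (inc i p), ?gN) = Bc j p f * \<phi> (inc i (dec 0 p), ?gN)"
    proof (cases "j = n - 1")
      case True
      hence "i \<noteq> 0" using ij by auto
      thus ?thesis using i' by (simp add: Bc_def incdec)
    qed simp
    have c4: "Ac j p f * Ac i (dec ?b p) ?gb = Ac i p f * Ac j (dec ?a p) ?ga"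
    proof (cases "i = 0")
      case False
      have ab: "?a < n - 1" "?b < n - 1" "?a \<noteq> Suc ?b" "?b \<noteq> Suc ?a" using ij False by auto
      have al1: "al (gn ?a) ?gb = al (gn ?a) f" using alpha_mul_right[OF gG(2) f, of "gn ?a"] al_gen1[OF ab(1,2)] ab by simp
      have al2: "al (gn ?b) ?ga = al (gn ?b) f" using alpha_mul_right[OF gG(1) f, of "gn ?b"] al_gen1[OF ab(2,1)] ab by simp
      show ?thesis using False ij i' al1 al2 by (simp add: Ac_def algebra_simps)
    qed simp
    have c5: "Bc j p f * Ac i (dec 0 p) ?gN = Ac i p f * Bc j (dec ?a p) ?ga"
    proof (cases "j = n - 1 \<and> i \<noteq> 0")
      case True
      have a: "?a < n - 1" "?a < n - 2" using ij True by auto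
      have al1: "al (gn ?a) ?gN = z * al (gn ?a) f" using alpha_mul_right[OF gG(3) f, of "gn ?a"] al_gen2[OF a(1)] a by simp
      have al2: "al (gn (n - 1)) ?ga = (if 0 < ?a then z else 1) * al (gn (n - 1)) f"
        using alpha_mul_right[OF gG(1) f, of "gn (n - 1)"] al_gen3[OF a(1)] by simp
      show ?thesis
      proof (cases "i = 1")
        case i1: True
        have q: "qn (p 0) * qn' (p 0 - 1) = qn' (p 0) * qn (p 0 - 1) * z" using qn_ident[of "p 0"] by (simp add: mult_ac)
        have al1': "al (gn 0) ?gN = z * al (gn 0) f" using al1 i1 by simp
        have al2': "al (gn (n - 1)) (gmul (gn 0) f) = al (gn (n - 1)) f" using al2 i1 by simp
        show ?thesis using True i1 n1_ne0 q al1' al2' by (simp add: Ac_def Bc_def algebra_simps)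
      next
        case False
        hence "0 < ?a" using True by auto
        thus ?thesis using True i' n1_ne0 al1 al2 by (simp add: Ac_def Bc_def algebra_simps)
      qed
    qed auto
    show ?thesis unfolding s e1 e2 st by (rule rel_comb2[OF c1 c2 c3 c4 c5])
  qed (simp add: s TX_simp)
qed

lemma relC: assumes "i < n" "j < n" "nat \<bar>int i - int j\<bar> \<notin> {1, n - 1}"
  shows "TX j (TX i \<phi>) s = TX i (TX j \<phi>) s"
proof -
  consider "i = j" | "i < j" | "j < i" by linarith
  thus ?thesis
  proof cases
    case 2 thus ?thesis using assms by (intro relC_lt) auto
  next
    case 3 thus ?thesis using assms by (intro relC_lt[symmetric]) auto
  qed simp
qed

end

context P begin

abbreviation "em \<equiv> emul n l z"
abbreviation "Al \<equiv> Alg n l"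
definition mprod :: "idx \<Rightarrow> idx \<Rightarrow> idx" where "mprod x y = (fst x @ fst y, gmul (snd x) (snd y))"
abbreviation "sc \<equiv> scoef n l z"

lemma emul_alt: "em a b w = (\<Sum>x\<in>supp a. \<Sum>y\<in>supp b. a x * b y * sc x y * (if w = mprod x y then 1 else 0))"
  unfolding emul_def mprod_def by simp

lemma emul_expand: assumes "finite F" "finite H" "supp a \<subseteq> F" "supp b \<subseteq> H"
  shows "em a b w = (\<Sum>x\<in>F. \<Sum>y\<in>H. a x * b y * sc x y * (if w = mprod x y then 1 else 0))"
proof -
  have "em a b w = (\<Sum>x\<in>F. \<Sum>y\<in>supp b. a x * b y * sc x y * (if w = mprod x y then 1 else 0))"
    unfolding emul_alt by (rule sum.mono_neutral_left) (use assms in \<open>auto simp: supp_def\<close>)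
  also have "\<dots> = (\<Sum>x\<in>F. \<Sum>y\<in>H. a x * b y * sc x y * (if w = mprod x y then 1 else 0))"
    by (intro sum.cong refl sum.mono_neutral_left) (use assms in \<open>auto simp: supp_def\<close>)
  finally show ?thesis .
qed

lemma supp_emul: "supp (em a b) \<subseteq> (\<lambda>(x, y). mprod x y) ` (supp a \<times> supp b)"
proof
  fix w assume "w \<in> supp (em a b)"
  hence "em a b w \<noteq> 0" by (simp add: supp_def)
  have "\<exists>x\<in>supp a. \<exists>y\<in>supp b. w = mprod x y"
  proof (rule ccontr)
    assume "\<not> ?thesis"
    hence "em a b w = 0" unfolding emul_alt by (intro sum.neutral ballI) auto
    thus False using \<open>em a b w \<noteq> 0\<close> by simp
  qed
  then obtain x y where "x \<in> supp a" "y \<in> supp b" "w = mprod x y" by blast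
  thus "w \<in> (\<lambda>(x, y). mprod x y) ` (supp a \<times> supp b)" by auto
qed

lemma Alg_iff: "a \<in> Al \<longleftrightarrow> finite (supp a) \<and> (\<forall>x\<in>supp a. set (fst x) \<subseteq> {..<n} \<and> snd x \<in> G)"
  unfolding Alg_def supp_def by auto

lemma emul_Alg: assumes "a \<in> Al" "b \<in> Al" shows "em a b \<in> Al"
proof -
  have f: "finite ((\<lambda>(x, y). mprod x y) ` (supp a \<times> supp b))" using assms by (simp add: Alg_iff)
  show ?thesis unfolding Alg_iff
  proof
    show "finite (supp (em a b))" using finite_subset[OF supp_emul f] .
    show "\<forall>x\<in>supp (em a b). set (fst x) \<subseteq> {..<n} \<and> snd x \<in> G"
    proof
      fix w assume "w \<in> supp (em a b)"
      hence "w \<in> (\<lambda>(x, y). mprod x y) ` (supp a \<times> supp b)" using supp_emul by blast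
      then obtain x y where "x \<in> supp a" "y \<in> supp b" "w = mprod x y" by auto
      thus "set (fst w) \<subseteq> {..<n} \<and> snd w \<in> G" using assms G_gmul unfolding Alg_iff mprod_def by auto
    qed
  qed
qed

lemma supp_B: "supp (B w g) = {(w, g)}" by (auto simp: supp_def B_def)

lemma B_Alg: "set w \<subseteq> {..<n} \<Longrightarrow> g \<in> G \<Longrightarrow> B w g \<in> Al"
  by (simp add: Alg_iff supp_B)

lemma emul_B: "em (B w g) (B v h) = esmul (sc (w, g) (v, h)) (B (w @ v) (gmul g h))"
proof
  fix x show "em (B w g) (B v h) x = esmul (sc (w, g) (v, h)) (B (w @ v) (gmul g h)) x"
    unfolding emul_alt supp_B by (auto simp: esmul_def B_def mprod_def)
qed

lemma sc_val: "sc (w, g) (v, h) = al g h * prod_list (map g v)" by (simp add: scoef_def)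

lemma eadd_Alg: "a \<in> Al \<Longrightarrow> b \<in> Al \<Longrightarrow> eadd a b \<in> Al"
proof -
  assume a: "a \<in> Al" and b: "b \<in> Al"
  have "supp (eadd a b) \<subseteq> supp a \<union> supp b" by (auto simp: supp_def eadd_def)
  thus ?thesis using a b unfolding Alg_iff by (meson UnE finite_UnI finite_subset subsetD)
qed
lemma esmul_Alg: "a \<in> Al \<Longrightarrow> esmul c a \<in> Al"
proof -
  assume a: "a \<in> Al"
  have "supp (esmul c a) \<subseteq> supp a" by (auto simp: supp_def esmul_def)
  thus ?thesis using a unfolding Alg_iff by (meson finite_subset subsetD)
qed
lemma esub_Alg: "a \<in> Al \<Longrightarrow> b \<in> Al \<Longrightarrow> esub a b \<in> Al"
proof -
  assume a: "a \<in> Al" and b: "b \<in> Al"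
  have "supp (esub a b) \<subseteq> supp a \<union> supp b" by (auto simp: supp_def esub_def)
  thus ?thesis using a b unfolding Alg_iff by (meson UnE finite_UnI finite_subset subsetD)
qed
lemma ezero_Alg: "ezero \<in> Al" by (simp add: Alg_iff supp_def ezero_def)

lemma X_Alg: "j < n \<Longrightarrow> X j \<in> Al" unfolding X_def using gone_G by (simp add: B_Alg)
lemma Gel_Alg: "g \<in> G \<Longrightarrow> Gel g \<in> Al" unfolding Gel_def by (simp add: B_Alg)

lemma Rels_Alg: "r \<in> Rels n l z t \<Longrightarrow> r \<in> Al"
  unfolding Rels_def
  by (auto intro!: esub_Alg emul_Alg X_Alg esmul_Alg Gel_Alg gnG)

lemma Ideal_Alg: "r \<in> Ideal n l z t \<Longrightarrow> r \<in> Al"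
  by (induction rule: Ideal.induct) (auto intro: Rels_Alg ezero_Alg eadd_Alg esmul_Alg emul_Alg)

end

context P begin

primrec Rw :: "nat list \<Rightarrow> vec \<Rightarrow> vec" where
  "Rw [] \<phi> = \<phi>" | "Rw (j # w) \<phi> = Rw w (TX j \<phi>)"

definition Rx :: "idx \<Rightarrow> vec \<Rightarrow> vec" where "Rx x \<phi> = TG (snd x) (Rw (fst x) \<phi>)"
definition Rop :: "elem \<Rightarrow> vec \<Rightarrow> vec" where "Rop a \<phi> = (\<lambda>s. \<Sum>x\<in>supp a. a x * Rx x \<phi> s)"

lemma TX_lin: "TX j (\<lambda>s. \<Sum>y\<in>F. c y * \<psi> y s) s0 = (\<Sum>y\<in>F. c y * TX j (\<psi> y) s0)"
proof -
  obtain p f where s: "s0 = (p, f)" by fastforce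
  show ?thesis
  proof (cases "f \<in> G")
    case True thus ?thesis unfolding s TX_exp[OF True]
      by (simp add: sum.distrib sum_distrib_left algebra_simps)
  qed (simp add: s TX_simp)
qed

lemma TG_lin: "TG g (\<lambda>s. \<Sum>y\<in>F. c y * \<psi> y s) s0 = (\<Sum>y\<in>F. c y * TG g (\<psi> y) s0)"
proof -
  obtain p f where s: "s0 = (p, f)" by fastforce
  show ?thesis unfolding s TG_simp by (simp add: sum_distrib_left algebra_simps)
qed

lemma TX_smul: "TX j (\<lambda>s. c * \<psi> s) s0 = c * TX j \<psi> s0"
  using TX_lin[where F="{()}" and c="\<lambda>_. c" and \<psi>="\<lambda>_. \<psi>"] by simp
lemma TG_smul: "TG g (\<lambda>s. c * \<psi> s) s0 = c * TG g \<psi> s0"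
  using TG_lin[where F="{()}" and c="\<lambda>_. c" and \<psi>="\<lambda>_. \<psi>"] by simp

lemma Rw_lin: "Rw w (\<lambda>s. \<Sum>y\<in>F. c y * \<psi> y s) = (\<lambda>s. \<Sum>y\<in>F. c y * Rw w (\<psi> y) s)"
proof (induction w arbitrary: \<psi>)
  case (Cons j w)
  have "TX j (\<lambda>s. \<Sum>y\<in>F. c y * \<psi> y s) = (\<lambda>s. \<Sum>y\<in>F. c y * TX j (\<psi> y) s)"
    by (rule ext) (rule TX_lin)
  thus ?case using Cons by simp
qed simp

lemma Rw_smul: "Rw w (\<lambda>s. c * \<psi> s) = (\<lambda>s. c * Rw w \<psi> s)"
  using Rw_lin[where F="{()}" and c="\<lambda>_. c" and \<psi>="\<lambda>_. \<psi>"] by simp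

lemma Rx_lin: "Rx x (\<lambda>s. \<Sum>y\<in>F. c y * \<psi> y s) s0 = (\<Sum>y\<in>F. c y * Rx x (\<psi> y) s0)"
  unfolding Rx_def Rw_lin TG_lin ..

lemma Rw_append: "Rw (w @ v) \<phi> = Rw v (Rw w \<phi>)"
  by (induction w arbitrary: \<phi>) auto

lemma Rw_TG: "g \<in> G \<Longrightarrow> set v \<subseteq> {..<n} \<Longrightarrow> Rw v (TG g \<phi>) = (\<lambda>s. prod_list (map g v) * TG g (Rw v \<phi>) s)"
proof (induction v arbitrary: \<phi>)
  case Nil thus ?case by simp
next
  case (Cons j v)
  have "Rw (j # v) (TG g \<phi>) = Rw v (\<lambda>s. g j * TG g (TX j \<phi>) s)" using E2[OF Cons.prems(1)] Cons.prems(2) by simp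
  also have "\<dots> = (\<lambda>s. g j * Rw v (TG g (TX j \<phi>)) s)" by (rule Rw_smul)
  also have "\<dots> = (\<lambda>s. g j * (prod_list (map g v) * TG g (Rw v (TX j \<phi>)) s))" using Cons by simp
  finally show ?case by (simp add: mult_ac)
qed

lemma Rx_mul: assumes "set (fst x) \<subseteq> {..<n}" "snd x \<in> G" "set (fst y) \<subseteq> {..<n}" "snd y \<in> G"
  shows "Rx y (Rx x \<phi>) s = sc x y * Rx (mprod x y) \<phi> s"
proof -
  obtain w g v h where xy: "x = (w, g)" "y = (v, h)" by fastforce
  have "Rx y (Rx x \<phi>) s = TG h (Rw v (TG g (Rw w \<phi>))) s" by (simp add: Rx_def xy)
  also have "\<dots> = TG h (\<lambda>s. prod_list (map g v) * TG g (Rw (w @ v) \<phi>) s) s"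
    using assms xy by (simp add: Rw_TG Rw_append)
  also have "\<dots> = prod_list (map g v) * TG h (TG g (Rw (w @ v) \<phi>)) s" by (rule TG_smul)
  also have "\<dots> = prod_list (map g v) * (al g h * TG (gmul g h) (Rw (w @ v) \<phi>) s)"
    using E1 assms xy by simp
  finally show ?thesis by (simp add: xy sc_val Rx_def mprod_def mult_ac)
qed

lemma Rop_alt: "finite F \<Longrightarrow> supp a \<subseteq> F \<Longrightarrow> Rop a \<phi> s = (\<Sum>x\<in>F. a x * Rx x \<phi> s)"
  unfolding Rop_def by (rule sum.mono_neutral_left) (auto simp: supp_def)

lemma Rop_mul: assumes a: "a \<in> Al" and b: "b \<in> Al" shows "Rop (em a b) \<phi> s = Rop b (Rop a \<phi>) s"
proof -
  let ?W = "(\<lambda>(x, y). mprod x y) ` (supp a \<times> supp b)"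
  have fa: "finite (supp a)" and fb: "finite (supp b)" using a b by (auto simp: Alg_iff)
  have fW: "finite ?W" using fa fb by simp
  have "Rop (em a b) \<phi> s = (\<Sum>w\<in>?W. em a b w * Rx w \<phi> s)" by (rule Rop_alt[OF fW supp_emul])
  also have "\<dots> = (\<Sum>w\<in>?W. \<Sum>x\<in>supp a. \<Sum>y\<in>supp b. a x * b y * sc x y * (if w = mprod x y then Rx w \<phi> s else 0))"
    unfolding emul_alt sum_distrib_right by (intro sum.cong refl) simp
  also have "\<dots> = (\<Sum>x\<in>supp a. \<Sum>y\<in>supp b. \<Sum>w\<in>?W. a x * b y * sc x y * (if w = mprod x y then Rx w \<phi> s else 0))"
    by (subst sum.swap) (simp add: sum.swap[of _ ?W])
  also have "\<dots> = (\<Sum>x\<in>supp a. \<Sum>y\<in>supp b. a x * b y * sc x y * Rx (mprod x y) \<phi> s)"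
  proof (intro sum.cong refl)
    fix x y assume "x \<in> supp a" "y \<in> supp b"
    hence "mprod x y \<in> ?W" by auto
    thus "(\<Sum>w\<in>?W. a x * b y * sc x y * (if w = mprod x y then Rx w \<phi> s else 0)) = a x * b y * sc x y * Rx (mprod x y) \<phi> s"
      using fW by (simp add: if_distrib sum.delta' cong: if_cong)
  qed
  also have "\<dots> = (\<Sum>y\<in>supp b. b y * (\<Sum>x\<in>supp a. a x * Rx y (Rx x \<phi>) s))"
  proof -
    have "Rx y (Rx x \<phi>) s = sc x y * Rx (mprod x y) \<phi> s" if "x \<in> supp a" "y \<in> supp b" for x y
      using that a b by (intro Rx_mul) (auto simp: Alg_iff)
    hence "(\<Sum>y\<in>supp b. b y * (\<Sum>x\<in>supp a. a x * Rx y (Rx x \<phi>) s)) = (\<Sum>y\<in>supp b. \<Sum>x\<in>supp a. a x * b y * sc x y * Rx (mprod x y) \<phi> s)"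
      by (simp add: sum_distrib_left mult_ac cong: sum.cong)
    thus ?thesis by (simp add: sum.swap[of _ "supp b"])
  qed
  also have "\<dots> = Rop b (Rop a \<phi>) s" unfolding Rop_def Rx_lin ..
  finally show ?thesis .
qed

lemma Rop_eadd: "finite (supp a) \<Longrightarrow> finite (supp b) \<Longrightarrow> Rop (eadd a b) \<phi> s = Rop a \<phi> s + Rop b \<phi> s"
proof -
  assume fa: "finite (supp a)" and fb: "finite (supp b)"
  let ?F = "supp a \<union> supp b"
  have "supp (eadd a b) \<subseteq> ?F" by (auto simp: supp_def eadd_def)
  hence "Rop (eadd a b) \<phi> s = (\<Sum>x\<in>?F. eadd a b x * Rx x \<phi> s)" using fa fb by (intro Rop_alt) auto
  also have "\<dots> = (\<Sum>x\<in>?F. a x * Rx x \<phi> s) + (\<Sum>x\<in>?F. b x * Rx x \<phi> s)"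
    by (simp add: eadd_def sum.distrib algebra_simps)
  also have "\<dots> = Rop a \<phi> s + Rop b \<phi> s"
  proof -
    have "Rop a \<phi> s = (\<Sum>x\<in>?F. a x * Rx x \<phi> s)" "Rop b \<phi> s = (\<Sum>x\<in>?F. b x * Rx x \<phi> s)"
      by (rule Rop_alt; use fa fb in auto)+
    thus ?thesis by simp
  qed
  finally show ?thesis .
qed

lemma Rop_esmul: "Rop (esmul c a) \<phi> s = c * Rop a \<phi> s"
proof (cases "c = 0")
  case True thus ?thesis by (simp add: Rop_def esmul_def supp_def)
next
  case False
  hence "supp (esmul c a) = supp a" by (auto simp: supp_def esmul_def)
  thus ?thesis by (simp add: Rop_def esmul_def sum_distrib_left mult_ac)
qed

lemma Rop_esub: "finite (supp a) \<Longrightarrow> finite (supp b) \<Longrightarrow> Rop (esub a b) \<phi> s = Rop a \<phi> s - Rop b \<phi> s"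
proof -
  assume fa: "finite (supp a)" and fb: "finite (supp b)"
  have e: "esub a b = eadd a (esmul (-1) b)" by (auto simp: esub_def eadd_def esmul_def)
  have "supp (esmul (-1) b) = supp b" by (auto simp: supp_def esmul_def)
  thus ?thesis unfolding e using fa fb by (simp add: Rop_eadd Rop_esmul)
qed

lemma Rop_ezero: "Rop ezero \<phi> s = 0" by (simp add: Rop_def ezero_def supp_def)

lemma TG_gone: "TG gone (TX j \<phi>) s = TX j \<phi> s"
proof -
  obtain p f where s: "s = (p, f)" by fastforce
  show ?thesis by (simp add: s TG_simp TX_simp chi_def gone_def[symmetric]) (simp add: gone_def)
qed

lemma Rop_X: "Rop (X j) \<phi> s = TX j \<phi> s"
  by (simp add: Rop_def X_def supp_B Rx_def TG_gone) (simp add: B_def)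

lemma Rop_Gel: "Rop (Gel g) \<phi> s = TG g \<phi> s"
  by (simp add: Rop_def Gel_def supp_B Rx_def) (simp add: B_def)

end

context P begin

lemma Rx_zero: "Rx x (\<lambda>_. 0) s = 0"
  using Rx_lin[where F="{}" and x=x] by simp

lemma Rop_zero: "Rop b (\<lambda>_. 0) s = 0"
  by (simp add: Rop_def Rx_zero)

lemma Rop_X_fun: "Rop (X j) \<phi> = TX j \<phi>" by (rule ext) (rule Rop_X)

lemma finite_supp_Al: "a \<in> Al \<Longrightarrow> finite (supp a)" by (simp add: Alg_iff)

lemma Rop_rel: assumes "r \<in> Rels n l z t" shows "Rop r \<phi> s = 0"
  using assms unfolding Rels_def
proof (elim UnE CollectE exE conjE)
  fix i assume r: "r = esub (esub (em (X i) (X (Suc i mod n))) (em (X (Suc i mod n)) (X i))) (esmul (t i) (Gel (gn i)))"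
    and i: "i < n"
  let ?i' = "Suc i mod n"
  have i': "?i' < n" using n3 by simp
  have A: "em (X i) (X ?i') \<in> Al" "em (X ?i') (X i) \<in> Al" "esmul (t i) (Gel (gn i)) \<in> Al"
    "esub (em (X i) (X ?i')) (em (X ?i') (X i)) \<in> Al"
    using i i' gnG by (auto intro!: emul_Alg X_Alg esmul_Alg Gel_Alg esub_Alg)
  have "Rop r \<phi> s = TX ?i' (TX i \<phi>) s - TX i (TX ?i' \<phi>) s - t i * TG (gn i) \<phi> s"
    unfolding r using A i i'
    by (simp add: Rop_esub finite_supp_Al Rop_mul X_Alg Rop_X_fun Rop_esmul Rop_Gel)
  also have "\<dots> = 0"
  proof -
    consider "i = n - 1" | "i = 0" "0 < n - 1" | k where "i = Suc k" "Suc (Suc k) < n" using i n3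
      by (metis One_nat_def Suc_lessI diff_Suc_1 not0_implies_Suc zero_less_diff)
    thus ?thesis
    proof cases
      case 1
      hence "?i' = 0" using n3 by simp
      thus ?thesis using relB[of \<phi> s] 1 by simp
    next
      case 2
      hence "?i' = 1" using n3 by simp
      thus ?thesis using relA0[of \<phi> s] 2 by simp
    next
      case 3
      hence "?i' = Suc (Suc k)" by simp
      thus ?thesis using relA[OF 3(2), of \<phi> s] 3 by simp
    qed
  qed
  finally show ?thesis .
next
  fix i j assume r: "r = esub (em (X i) (X j)) (em (X j) (X i))" and ij: "i < n" "j < n"
    "nat \<bar>int i - int j\<bar> \<notin> {1, n - 1}"
  have A: "em (X i) (X j) \<in> Al" "em (X j) (X i) \<in> Al" using ij by (auto intro!: emul_Alg X_Alg)
  have "Rop r \<phi> s = TX j (TX i \<phi>) s - TX i (TX j \<phi>) s"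
    unfolding r using A ij by (simp add: Rop_esub finite_supp_Al Rop_mul X_Alg Rop_X_fun)
  thus ?thesis using relC[OF ij] by simp
qed

lemma Rop_Ideal: "r \<in> Ideal n l z t \<Longrightarrow> \<forall>\<phi> s. Rop r \<phi> s = 0"
proof (induction rule: Ideal.induct)
  case (gen_rel r) thus ?case using Rop_rel by blast
next
  case zero thus ?case by (simp add: Rop_ezero)
next
  case (add a b) thus ?case using Ideal_Alg by (simp add: Rop_eadd finite_supp_Al)
next
  case (smul a c) thus ?case by (simp add: Rop_esmul)
next
  case (lmul a b) thus ?case using Ideal_Alg by (simp add: Rop_mul)
next
  case (rmul a b)
  have "\<And>\<phi>. Rop a \<phi> = (\<lambda>_. 0)" using rmul by auto
  thus ?case using Ideal_Alg rmul by (simp add: Rop_mul Rop_zero)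
qed

end

context P begin

definition word :: "(nat \<Rightarrow> nat) \<Rightarrow> nat list" where
  "word p = concat (map (\<lambda>i. replicate (p i) i) [0..<n])"

lemma mono_eq: "mono n m = B (word (fst m)) (snd m)" by (simp add: mono_def word_def)

lemma count_rep: "count_list (replicate k x) y = (if x = y then k else 0)"
  by (induction k) auto

lemma word_gen: "sorted (concat (map (\<lambda>i. replicate (p i) i) [0..<b])) \<and>
   set (concat (map (\<lambda>i. replicate (p i) i) [0..<b])) \<subseteq> {..<b} \<and>
   (\<forall>i. count_list (concat (map (\<lambda>i. replicate (p i) i) [0..<b])) i = (if i < b then p i else 0))"
proof (induction b)
  case (Suc b)
  thus ?case by (auto simp: sorted_append count_rep)
qed simp

lemma word_props: "sorted (word p)" "set (word p) \<subseteq> {..<n}" "count_list (word p) i = (if i < n then p i else 0)"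
  using word_gen[of p n] unfolding word_def by auto

lemma TX_clean: "f \<in> G \<Longrightarrow> \<forall>i<j. q i = 0 \<Longrightarrow> TX j \<phi> (q, f) = \<phi> (inc j q, f)"
proof -
  assume f: "f \<in> G" and q: "\<forall>i<j. q i = 0"
  have "Ac j q f = 0" using q by (cases j) (auto simp: Ac_def)
  moreover have "Bc j q f = 0" using q n3 by (auto simp: Bc_def)
  ultimately show ?thesis using TX_exp[OF f] by simp
qed

lemma Rw_sorted: "sorted w \<Longrightarrow> g \<in> G \<Longrightarrow> (\<forall>x\<in>set w. \<forall>i<x. q i = 0) \<Longrightarrow>
   Rw w \<phi> (q, g) = \<phi> (\<lambda>i. q i + count_list w i, g)"
proof (induction w arbitrary: \<phi>)
  case Nil thus ?case by simp
next
  case (Cons x w)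
  have ih: "Rw w (TX x \<phi>) (q, g) = TX x \<phi> (\<lambda>i. q i + count_list w i, g)" using Cons by auto
  have "\<forall>i<x. q i + count_list w i = 0"
  proof (intro allI impI)
    fix i assume "i < x"
    hence "i \<notin> set w" using Cons.prems(1) by auto
    moreover have "q i = 0" using Cons.prems(3) \<open>i < x\<close> by auto
    ultimately show "q i + count_list w i = 0" by (simp add: count_list_0_iff)
  qed
  hence "TX x \<phi> (\<lambda>i. q i + count_list w i, g) = \<phi> (inc x (\<lambda>i. q i + count_list w i), g)"
    by (rule TX_clean[OF Cons.prems(2)])
  moreover have "inc x (\<lambda>i. q i + count_list w i) = (\<lambda>i. q i + count_list (x # w) i)"
    by (auto simp: inc_def)
  ultimately show ?case using ih by simp
qed

definition z0st :: "nat \<Rightarrow> nat" where "z0st = (\<lambda>_. 0)"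

lemma chi_z0: "chi g z0st = 1" by (simp add: chi_def z0st_def)

lemma Rop_mono: assumes "m \<in> Mon n l" shows "Rop (mono n m) \<phi> (z0st, gone) = \<phi> m"
proof -
  obtain p g where m: "m = (p, g)" by fastforce
  have g: "g \<in> G" and p: "\<forall>i\<ge>n. p i = 0" using assms m by (auto simp: Mon_def)
  have "Rop (mono n m) \<phi> (z0st, gone) = TG g (Rw (word p) \<phi>) (z0st, gone)"
    by (simp add: Rop_def mono_eq m supp_B Rx_def) (simp add: B_def)
  also have "\<dots> = Rw (word p) \<phi> (z0st, g)" using gone_G by (simp add: TG_simp chi_z0)
  also have "\<dots> = \<phi> (\<lambda>i. z0st i + count_list (word p) i, g)"
    using word_props(1) g by (intro Rw_sorted) (auto simp: z0st_def)
  also have "(\<lambda>i. z0st i + count_list (word p) i) = p" using p by (auto simp: z0st_def word_props(3))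
  finally show ?thesis by (simp add: m)
qed

lemma mono_Alg: "m \<in> Mon n l \<Longrightarrow> mono n m \<in> Al"
  using word_props(2) by (auto simp: mono_eq Mon_def intro!: B_Alg)

lemma Rop_sum: assumes "finite S" "\<forall>m\<in>S. finite (supp (b m))"
  shows "Rop (\<lambda>x. \<Sum>m\<in>S. c m * b m x) \<phi> s = (\<Sum>m\<in>S. c m * Rop (b m) \<phi> s)"
proof -
  let ?F = "\<Union>m\<in>S. supp (b m)"
  have fF: "finite ?F" using assms by auto
  have sub: "supp (\<lambda>x. \<Sum>m\<in>S. c m * b m x) \<subseteq> ?F"
  proof
    fix x assume "x \<in> supp (\<lambda>x. \<Sum>m\<in>S. c m * b m x)"
    hence "(\<Sum>m\<in>S. c m * b m x) \<noteq> 0" by (simp add: supp_def)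
    then obtain m where "m \<in> S" "b m x \<noteq> 0" by (metis (mono_tags, lifting) mult_zero_right sum.neutral)
    thus "x \<in> ?F" by (auto simp: supp_def)
  qed
  have "Rop (\<lambda>x. \<Sum>m\<in>S. c m * b m x) \<phi> s = (\<Sum>x\<in>?F. (\<Sum>m\<in>S. c m * b m x) * Rx x \<phi> s)"
    by (rule Rop_alt[OF fF sub])
  also have "\<dots> = (\<Sum>m\<in>S. c m * (\<Sum>x\<in>?F. b m x * Rx x \<phi> s))"
    by (simp add: sum_distrib_right sum_distrib_left sum.swap[of _ ?F] mult_ac)
  also have "\<dots> = (\<Sum>m\<in>S. c m * Rop (b m) \<phi> s)"
    using assms fF by (intro sum.cong refl arg_cong2[where f="(*)"] Rop_alt[symmetric]) auto
  finally show ?thesis .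
qed

lemma lincomb_Rop: "finite S \<Longrightarrow> S \<subseteq> Mon n l \<Longrightarrow> Rop (lincomb n S c) \<phi> (z0st, gone) = (\<Sum>m\<in>S. c m * \<phi> m)"
proof -
  assume S: "finite S" "S \<subseteq> Mon n l"
  have "Rop (lincomb n S c) \<phi> (z0st, gone) = (\<Sum>m\<in>S. c m * Rop (mono n m) \<phi> (z0st, gone))"
    unfolding lincomb_def using S by (subst Rop_sum) (auto intro: finite_supp_Al mono_Alg)
  also have "\<dots> = (\<Sum>m\<in>S. c m * \<phi> m)" using S Rop_mono by (intro sum.cong refl) auto
  finally show ?thesis .
qed

lemma independence: assumes "finite S" "S \<subseteq> Mon n l" "lincomb n S c \<in> Ideal n l z t" "m \<in> S"
  shows "c m = 0"
proof -
  let ?\<phi> = "\<lambda>x. if x = m then (1::complex) else 0"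
  have "Rop (lincomb n S c) ?\<phi> (z0st, gone) = 0" using Rop_Ideal[OF assms(3)] by blast
  moreover have "Rop (lincomb n S c) ?\<phi> (z0st, gone) = c m"
    using lincomb_Rop[OF assms(1,2)] assms(1,4) by (simp add: if_distrib sum.delta' cong: if_cong)
  ultimately show ?thesis by simp
qed

end

context P begin

abbreviation "I \<equiv> Ideal n l z t"

lemma finite_Ex: "finite Ex"
proof -
  have "Ex \<subseteq> {e. \<forall>x. (x \<in> {..<n-1} \<longrightarrow> e x \<in> {..<l}) \<and> (x \<notin> {..<n-1} \<longrightarrow> e x = 0)}"
    unfolding Ex_def by auto
  thus ?thesis by (rule finite_subset) (intro finite_set_of_finite_funs; simp)
qed

lemma finite_G: "finite G"
proof -
  have "G \<subseteq> gprod n z ` Ex" using G_exists by blast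
  thus ?thesis using finite_Ex finite_subset by blast
qed

definition deg :: "(nat \<Rightarrow> nat) \<Rightarrow> nat" where "deg p = (\<Sum>i<n. p i)"
definition Mle :: "nat \<Rightarrow> ((nat \<Rightarrow> nat) \<times> grp) set" where "Mle D = {m \<in> Mon n l. deg (fst m) \<le> D}"

lemma finite_Mle: "finite (Mle D)"
proof -
  let ?P = "{p. \<forall>x. (x \<in> {..<n} \<longrightarrow> p x \<in> {..D}) \<and> (x \<notin> {..<n} \<longrightarrow> p x = 0)}"
  have fP: "finite ?P" by (intro finite_set_of_finite_funs) auto
  have "Mle D \<subseteq> ?P \<times> G"
  proof
    fix m assume m: "m \<in> Mle D"
    obtain p g where mp: "m = (p, g)" by fastforce
    have "p x \<le> D" if "x < n" for x
    proof -
      have "p x \<le> deg p" unfolding deg_def using that by (intro member_le_sum) auto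
      thus ?thesis using m mp by (simp add: Mle_def)
    qed
    thus "m \<in> ?P \<times> G" using m mp by (auto simp: Mle_def Mon_def)
  qed
  thus ?thesis using fP finite_G by (meson finite_SigmaI finite_subset)
qed

lemma Mle_mono: "D \<le> D' \<Longrightarrow> Mle D \<subseteq> Mle D'" by (auto simp: Mle_def)

lemma length_word_gen: "length (concat (map (\<lambda>i. replicate (p i) i) [0..<b])) = (\<Sum>i<b. p i)"
  by (induction b) auto

lemma length_word: "length (word p) = deg p"
  unfolding word_def deg_def by (rule length_word_gen)

lemma I_esub: "a \<in> I \<Longrightarrow> b \<in> I \<Longrightarrow> esub a b \<in> I"
proof -
  assume "a \<in> I" "b \<in> I"
  hence "eadd a (esmul (-1) b) \<in> I" by (intro Ideal.add Ideal.smul)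
  moreover have "eadd a (esmul (-1) b) = esub a b" by (auto simp: eadd_def esmul_def esub_def)
  ultimately show ?thesis by simp
qed

lemma I_sum: "finite S \<Longrightarrow> \<forall>m\<in>S. r m \<in> I \<Longrightarrow> (\<lambda>x. \<Sum>m\<in>S. c m * r m x) \<in> I"
proof (induction S rule: finite_induct)
  case empty
  have "(\<lambda>x. \<Sum>m\<in>{}. c m * r m x) = ezero" by (simp add: ezero_def)
  thus ?case using Ideal.zero by simp
next
  case (insert a S)
  have "(\<lambda>x. \<Sum>m\<in>insert a S. c m * r m x) = eadd (esmul (c a) (r a)) (\<lambda>x. \<Sum>m\<in>S. c m * r m x)"
    using insert by (auto simp: eadd_def esmul_def)
  thus ?case using insert by (auto intro: Ideal.add Ideal.smul)
qed

definition SP :: "nat \<Rightarrow> elem \<Rightarrow> bool" where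
  "SP D a \<longleftrightarrow> (\<exists>c. esub a (lincomb n (Mle D) c) \<in> I)"

lemma esub_self: "esub a a = ezero" by (simp add: esub_def ezero_def)

lemma SP_mono: assumes "m \<in> Mle D" shows "SP D (mono n m)"
proof -
  have "lincomb n (Mle D) (\<lambda>u. if u = m then 1 else 0) = mono n m"
  proof
    fix x
    have "lincomb n (Mle D) (\<lambda>u. if u = m then 1 else 0) x = (\<Sum>u\<in>Mle D. if u = m then mono n u x else 0)"
      unfolding lincomb_def by (intro sum.cong) auto
    also have "\<dots> = mono n m x" using assms finite_Mle by simp
    finally show "lincomb n (Mle D) (\<lambda>u. if u = m then 1 else 0) x = mono n m x" .
  qed
  hence "esub (mono n m) (lincomb n (Mle D) (\<lambda>u. if u = m then 1 else 0)) \<in> I"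
    using esub_self Ideal.zero by simp
  thus ?thesis unfolding SP_def by blast
qed

lemma SP_equiv: "SP D b \<Longrightarrow> esub a b \<in> I \<Longrightarrow> SP D a"
proof -
  assume "SP D b" "esub a b \<in> I"
  then obtain c where c: "esub b (lincomb n (Mle D) c) \<in> I" unfolding SP_def by blast
  have "esub a (lincomb n (Mle D) c) = eadd (esub a b) (esub b (lincomb n (Mle D) c))"
    by (auto simp: esub_def eadd_def)
  hence "esub a (lincomb n (Mle D) c) \<in> I" using c \<open>esub a b \<in> I\<close> Ideal.add by simp
  thus "SP D a" unfolding SP_def by blast
qed

lemma SP_sum: assumes "finite S" "\<forall>m\<in>S. SP D (a m)" shows "SP D (\<lambda>x. \<Sum>m\<in>S. k m * a m x)"
proof -
  obtain c where c: "\<forall>m\<in>S. esub (a m) (lincomb n (Mle D) (c m)) \<in> I"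
    using assms(2) unfolding SP_def by metis
  let ?c = "\<lambda>u. \<Sum>m\<in>S. k m * c m u"
  have "esub (\<lambda>x. \<Sum>m\<in>S. k m * a m x) (lincomb n (Mle D) ?c)
      = (\<lambda>x. \<Sum>m\<in>S. k m * esub (a m) (lincomb n (Mle D) (c m)) x)"
    by (auto simp: esub_def lincomb_def sum_subtractf[symmetric] right_diff_distrib
          sum_distrib_left sum_distrib_right sum.swap[of _ S] mult_ac)
  hence "esub (\<lambda>x. \<Sum>m\<in>S. k m * a m x) (lincomb n (Mle D) ?c) \<in> I"
    using I_sum[OF assms(1) c, of k] by simp
  thus ?thesis unfolding SP_def by blast
qed

lemma SP_add: "SP D a \<Longrightarrow> SP D b \<Longrightarrow> SP D (eadd a b)"
  using SP_sum[of "{True, False}" D "\<lambda>m. if m then a else b" "\<lambda>_. 1"]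
  by (simp add: eadd_def)
lemma SP_smul: "SP D a \<Longrightarrow> SP D (esmul k a)"
  using SP_sum[of "{()}" D "\<lambda>_. a" "\<lambda>_. k"] by (simp add: esmul_def)

end

context P begin

lemma esmul_1: "esmul 1 a = a" by (simp add: esmul_def)

lemma prod_list_ones: "prod_list (map (\<lambda>_. 1::complex) v) = 1" by (induction v) auto

lemma em_B_gone: "em (B w gone) (B v g) = B (w @ v) g"
  by (simp add: emul_B sc_val esmul_1) (simp add: gone_def prod_list_ones esmul_1)

lemma em_XX: "em (X a) (X b) = B [a, b] gone"
  unfolding X_def em_B_gone by simp

lemma em_XXB: "em (em (X a) (X b)) (B rest g) = B (a # b # rest) g"
  unfolding em_XX em_B_gone by simp

lemma em_Gel_B: "em (Gel h) (B v g) = esmul (al h g * prod_list (map h v)) (B v (gmul h g))"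
  unfolding Gel_def emul_B sc_val by simp

lemma em_esub_left: assumes "finite (supp a)" "finite (supp b)" "finite (supp c)"
  shows "em (esub a b) c = esub (em a c) (em b c)"
proof
  fix w
  let ?F = "supp a \<union> supp b"
  have s: "supp (esub a b) \<subseteq> ?F" by (auto simp: supp_def esub_def)
  show "em (esub a b) c w = esub (em a c) (em b c) w"
    unfolding esub_def
    using emul_expand[of ?F "supp c" "esub a b" c w] emul_expand[of ?F "supp c" a c w] emul_expand[of ?F "supp c" b c w] assms s
    by (simp add: esub_def sum_subtractf[symmetric] left_diff_distrib)
qed

lemma em_esmul_left: "em (esmul k a) c = esmul k (em a c)"
proof (cases "k = 0")
  case True thus ?thesis by (auto simp: esmul_def emul_def supp_def)
next
  case False
  hence "supp (esmul k a) = supp a" by (auto simp: supp_def esmul_def)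
  thus ?thesis by (auto simp: esmul_def emul_def sum_distrib_left mult_ac)
qed

lemma em_sum_right: assumes "finite S" "\<forall>m\<in>S. finite (supp (b m))" "finite (supp a)"
  shows "em a (\<lambda>x. \<Sum>m\<in>S. k m * b m x) = (\<lambda>w. \<Sum>m\<in>S. k m * em a (b m) w)"
proof
  fix w
  let ?H = "\<Union>m\<in>S. supp (b m)"
  have fH: "finite ?H" using assms by auto
  have sub: "supp (\<lambda>x. \<Sum>m\<in>S. k m * b m x) \<subseteq> ?H"
  proof
    fix x assume "x \<in> supp (\<lambda>x. \<Sum>m\<in>S. k m * b m x)"
    hence "(\<Sum>m\<in>S. k m * b m x) \<noteq> 0" by (simp add: supp_def)
    then obtain m where "m \<in> S" "b m x \<noteq> 0" by (metis (mono_tags, lifting) mult_zero_right sum.neutral)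
    thus "x \<in> ?H" by (auto simp: supp_def)
  qed
  have e1: "em a (\<lambda>x. \<Sum>m\<in>S. k m * b m x) w = (\<Sum>x\<in>supp a. \<Sum>y\<in>?H. a x * (\<Sum>m\<in>S. k m * b m y) * sc x y * (if w = mprod x y then 1 else 0))"
    by (rule emul_expand[OF assms(3) fH]) (use sub in auto)
  have e2: "em a (b m) w = (\<Sum>x\<in>supp a. \<Sum>y\<in>?H. a x * b m y * sc x y * (if w = mprod x y then 1 else 0))" if "m \<in> S" for m
    by (rule emul_expand[OF assms(3) fH]) (use that in auto)
  show "em a (\<lambda>x. \<Sum>m\<in>S. k m * b m x) w = (\<Sum>m\<in>S. k m * em a (b m) w)"
    unfolding e1 using e2
    by (simp add: sum_distrib_left sum_distrib_right sum.swap[of _ S] mult_ac cong: sum.cong)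
qed

lemma swap_rel: assumes ij: "i0 < j" "j < n" and g: "g \<in> G" and r: "set rest \<subseteq> {..<n}"
  shows "\<exists>k g'. g' \<in> G \<and> esub (B (j # i0 # rest) g) (eadd (B (i0 # j # rest) g) (esmul k (B rest g'))) \<in> I"
proof -
  have BA: "B rest g \<in> Al" by (rule B_Alg[OF r g])
  have XA: "X j \<in> Al" "X i0 \<in> Al" using ij by (auto intro: X_Alg)
  have EA: "em (X j) (X i0) \<in> Al" "em (X i0) (X j) \<in> Al" using XA by (auto intro: emul_Alg)
  consider "nat \<bar>int j - int i0\<bar> \<notin> {1, n - 1}" | "j = Suc i0" | "j = n - 1" "i0 = 0" "j \<noteq> Suc i0"
    using ij by force
  thus ?thesis
  proof cases
    case 1
    let ?r = "esub (em (X j) (X i0)) (em (X i0) (X j))"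
    have "?r \<in> Rels n l z t" unfolding Rels_def using ij 1 by (intro UnI2 CollectI exI[of _ j] exI[of _ i0]) auto
    hence "em ?r (B rest g) \<in> I" using BA by (intro Ideal.rmul Ideal.gen_rel)
    moreover have "em ?r (B rest g) = esub (B (j # i0 # rest) g) (eadd (B (i0 # j # rest) g) (esmul 0 (B rest g)))"
      using EA BA by (simp add: em_esub_left finite_supp_Al em_XXB) (auto simp: esub_def eadd_def esmul_def)
    ultimately show ?thesis using g by metis
  next
    case 2
    have sm: "Suc i0 mod n = j" using 2 ij by simp
    let ?r = "esub (esub (em (X i0) (X j)) (em (X j) (X i0))) (esmul (t i0) (Gel (gn i0)))"
    have gi: "gn i0 \<in> G" using ij gnG by simp
    have "?r \<in> Rels n l z t" unfolding Rels_def using ij sm by (intro UnI1 CollectI exI[of _ i0]) auto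
    hence "em ?r (B rest g) \<in> I" using BA by (intro Ideal.rmul Ideal.gen_rel)
    hence "esmul (-1) (em ?r (B rest g)) \<in> I" by (rule Ideal.smul)
    moreover have "esmul (-1) (em ?r (B rest g)) = esub (B (j # i0 # rest) g) (eadd (B (i0 # j # rest) g)
        (esmul (- (t i0 * (al (gn i0) g * prod_list (map (gn i0) rest)))) (B rest (gmul (gn i0) g))))"
      using EA BA gi by (simp add: em_esub_left finite_supp_Al em_XXB esub_Alg esmul_Alg Gel_Alg em_esmul_left em_Gel_B)
        (auto simp: esub_def eadd_def esmul_def)
    ultimately show ?thesis using G_gmul[OF gi g] by metis
  next
    case 3
    have sm: "Suc (n - 1) mod n = 0" using n3 by simp
    let ?r = "esub (esub (em (X (n - 1)) (X 0)) (em (X 0) (X (n - 1)))) (esmul (t (n - 1)) (Gel (gn (n - 1))))"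
    have gi: "gn (n - 1) \<in> G" using gnG by simp
    have "?r \<in> Rels n l z t" unfolding Rels_def using n3 sm by (intro UnI1 CollectI exI[of _ "n - 1"]) auto
    hence "em ?r (B rest g) \<in> I" using BA by (intro Ideal.rmul Ideal.gen_rel)
    moreover have "em ?r (B rest g) = esub (B (j # i0 # rest) g) (eadd (B (i0 # j # rest) g)
        (esmul (t (n - 1) * (al (gn (n - 1)) g * prod_list (map (gn (n - 1)) rest))) (B rest (gmul (gn (n - 1)) g))))"
      using EA BA gi 3 by (simp add: em_esub_left finite_supp_Al em_XXB esub_Alg esmul_Alg Gel_Alg em_esmul_left em_Gel_B)
        (auto simp: esub_def eadd_def esmul_def)
    ultimately show ?thesis using G_gmul[OF gi g] by metis
  qed
qed

end

context P begin

lemma em_esub_right: assumes "finite (supp a)" "finite (supp b)" "finite (supp c)"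
  shows "em c (esub a b) = esub (em c a) (em c b)"
proof
  fix w
  let ?F = "supp a \<union> supp b"
  have s: "supp (esub a b) \<subseteq> ?F" by (auto simp: supp_def esub_def)
  show "em c (esub a b) w = esub (em c a) (em c b) w"
    unfolding esub_def
    using emul_expand[of "supp c" ?F c "esub a b" w] emul_expand[of "supp c" ?F c a w] emul_expand[of "supp c" ?F c b w] assms s
    by (simp add: esub_def sum_subtractf[symmetric] left_diff_distrib right_diff_distrib)
qed

lemma word_split: assumes "j < n" "\<forall>i<j. p i = 0"
  shows "word p = replicate (p j) j @ concat (map (\<lambda>i. replicate (p i) i) [Suc j..<n])"
proof -
  have "[0..<n] = [0..<j] @ j # [Suc j..<n]" using assms(1)
    using upt_add_eq_append[of 0 j "n - j"] upt_conv_Cons[of j n] by simp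
  moreover have "concat (map (\<lambda>i. replicate (p i) i) [0..<j]) = []" using assms(2) by auto
  ultimately show ?thesis unfolding word_def by simp
qed

lemma word_inc: "j < n \<Longrightarrow> \<forall>i<j. p i = 0 \<Longrightarrow> word (inc j p) = j # word p"
proof -
  assume a: "j < n" "\<forall>i<j. p i = 0"
  have b: "\<forall>i<j. inc j p i = 0" using a by (simp add: inc_def)
  have me: "map (\<lambda>i. replicate (inc j p i) i) [Suc j..<n] = map (\<lambda>i. replicate (p i) i) [Suc j..<n]"
    by (intro map_cong refl) (simp add: inc_def)
  have "word (inc j p) = replicate (inc j p j) j @ concat (map (\<lambda>i. replicate (inc j p i) i) [Suc j..<n])"
    by (rule word_split[OF a(1) b])
  also have "\<dots> = j # (replicate (p j) j @ concat (map (\<lambda>i. replicate (p i) i) [Suc j..<n]))"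
    unfolding me by (simp add: inc_def)
  also have "\<dots> = j # word p" using word_split[OF a] by simp
  finally show ?thesis .
qed

lemma word_dec: "j < n \<Longrightarrow> \<forall>i<j. p i = 0 \<Longrightarrow> 0 < p j \<Longrightarrow> word p = j # word (dec j p)"
proof -
  assume a: "j < n" "\<forall>i<j. p i = 0" "0 < p j"
  have b: "\<forall>i<j. dec j p i = 0" using a by (simp add: dec_def)
  have me: "map (\<lambda>i. replicate (dec j p i) i) [Suc j..<n] = map (\<lambda>i. replicate (p i) i) [Suc j..<n]"
    by (intro map_cong refl) (simp add: dec_def)
  have r: "replicate (p j) j = j # replicate (p j - 1) j" using a(3) by (cases "p j") auto
  have "word (dec j p) = replicate (dec j p j) j @ concat (map (\<lambda>i. replicate (dec j p i) i) [Suc j..<n])"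
    by (rule word_split[OF a(1) b])
  also have "\<dots> = replicate (p j - 1) j @ concat (map (\<lambda>i. replicate (p i) i) [Suc j..<n])"
    unfolding me by (simp add: dec_def)
  finally show ?thesis using word_split[OF a(1,2)] r by simp
qed

lemma deg_inc: "j < n \<Longrightarrow> deg (inc j p) = Suc (deg p)"
  unfolding deg_def inc_def by (simp add: sum.remove[of "{..<n}" j] sum.cong[of _ _ "\<lambda>i. (p(j := Suc (p j))) i" p])

lemma deg_dec: "j < n \<Longrightarrow> 0 < p j \<Longrightarrow> Suc (deg (dec j p)) = deg p"
proof -
  assume a: "j < n" "0 < p j"
  have "inc j (dec j p) = p" using incdec(5)[of p j, OF a(2)] .
  thus ?thesis using deg_inc[OF a(1), of "dec j p"] by simp
qed

lemma sumlt_dec: "i0 < j \<Longrightarrow> 0 < p i0 \<Longrightarrow> (\<Sum>i<j. dec i0 p i) < (\<Sum>i<j. p i)"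
proof -
  assume a: "i0 < j" "0 < p i0"
  have "Suc (\<Sum>i<j. dec i0 p i) = (\<Sum>i<j. inc i0 (dec i0 p) i)"
    using deg_inc unfolding deg_def inc_def using a
    by (simp add: sum.remove[of "{..<j}" i0] sum.cong[of "{..<j} - {i0}" _ "\<lambda>i. (dec i0 p) i"])
     also have "\<dots> = (\<Sum>i<j. p i)" using incdec(5)[of p i0, OF a(2)] by simp
  finally show ?thesis by simp
qed

lemma Mon_inc: "(p, g) \<in> Mon n l \<Longrightarrow> j < n \<Longrightarrow> (inc j p, g) \<in> Mon n l"
  by (auto simp: Mon_def inc_def)
lemma Mon_dec: "(p, g) \<in> Mon n l \<Longrightarrow> g' \<in> G \<Longrightarrow> (dec j p, g') \<in> Mon n l"
  by (auto simp: Mon_def dec_def)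

end

context P begin

lemma em_X_B: "em (X j) (B w g) = B (j # w) g" unfolding X_def em_B_gone by simp

lemma em_X_lincomb: assumes "SP D0 b" "b \<in> Al" "j < n" and K: "\<And>m. m \<in> Mle D0 \<Longrightarrow> SP D (B (j # word (fst m)) (snd m))"
  shows "SP D (em (X j) b)"
proof -
  obtain c where c: "esub b (lincomb n (Mle D0) c) \<in> I" using assms(1) unfolding SP_def by blast
  let ?L = "lincomb n (Mle D0) c"
  have monoA: "\<forall>m\<in>Mle D0. finite (supp (mono n m))" using mono_Alg finite_supp_Al by (auto simp: Mle_def)
  have LA: "finite (supp ?L)"
  proof -
    have "supp ?L \<subseteq> (\<Union>m\<in>Mle D0. supp (mono n m))"
    proof
      fix x assume "x \<in> supp ?L"
      hence "(\<Sum>m\<in>Mle D0. c m * mono n m x) \<noteq> 0" by (simp add: supp_def lincomb_def)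
      then obtain m where "m \<in> Mle D0" "mono n m x \<noteq> 0" by (metis (mono_tags, lifting) mult_zero_right sum.neutral)
      thus "x \<in> (\<Union>m\<in>Mle D0. supp (mono n m))" by (auto simp: supp_def)
    qed
    thus ?thesis using monoA finite_Mle by (meson finite_UN_I finite_subset)
  qed
  have XA: "X j \<in> Al" using assms(3) by (rule X_Alg)
  have "em (X j) (esub b ?L) \<in> I" using c XA by (rule Ideal.lmul)
  hence e: "esub (em (X j) b) (em (X j) ?L) \<in> I"
    using em_esub_right[OF finite_supp_Al[OF assms(2)] LA finite_supp_Al[OF XA]] by simp
  have "em (X j) ?L = (\<lambda>w. \<Sum>m\<in>Mle D0. c m * em (X j) (mono n m) w)"
    unfolding lincomb_def by (rule em_sum_right[OF finite_Mle monoA finite_supp_Al[OF XA]])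
  also have "\<dots> = (\<lambda>w. \<Sum>m\<in>Mle D0. c m * B (j # word (fst m)) (snd m) w)" by (simp add: mono_eq em_X_B)
  finally have "SP D (em (X j) ?L)" using SP_sum[OF finite_Mle] K by simp
  thus ?thesis using SP_equiv e by blast
qed

lemma K: "j < n \<Longrightarrow> (p, g) \<in> Mon n l \<Longrightarrow> deg p + 1 \<le> D \<Longrightarrow> SP D (B (j # word p) g)"
proof (induction j arbitrary: p g D rule: less_induct)
  case (less j)
  show ?case using less.prems
  proof (induction "\<Sum>i<j. p i" arbitrary: p g D rule: less_induct)
    case less2: less
    have g: "g \<in> G" and pn: "\<forall>i\<ge>n. p i = 0" using less2.prems(2) by (auto simp: Mon_def)
    show ?case
    proof (cases "\<forall>i<j. p i = 0")
      case True
      have "B (j # word p) g = mono n (inc j p, g)" using word_inc[OF less2.prems(1) True] by (simp add: mono_eq)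
      moreover have "(inc j p, g) \<in> Mle D" using Mon_inc[OF less2.prems(2,1)] deg_inc[OF less2.prems(1)] less2.prems(3)
        by (simp add: Mle_def)
      ultimately show ?thesis using SP_mono by simp
    next
      case False
      define i0 where "i0 = (LEAST i. p i \<noteq> 0)"
      obtain i1 where i1: "i1 < j" "p i1 \<noteq> 0" using False by auto
      have pi0: "p i0 \<noteq> 0" unfolding i0_def by (rule LeastI[of "\<lambda>i. p i \<noteq> 0", OF i1(2)])
      have "i0 \<le> i1" unfolding i0_def by (rule Least_le) (rule i1(2))
      hence i0j: "i0 < j" using i1 by simp
      have below: "\<forall>i<i0. p i = 0" unfolding i0_def using not_less_Least by blast
      have i0n: "i0 < n" using i0j less2.prems(1) by simp
      define q where "q = dec i0 p"
      have wp: "word p = i0 # word q" unfolding q_def using word_dec[OF i0n below] pi0 by simp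
      have dq: "Suc (deg q) = deg p" unfolding q_def using deg_dec[OF i0n] pi0 by simp
      have sq: "(\<Sum>i<j. q i) < (\<Sum>i<j. p i)" unfolding q_def using sumlt_dec[OF i0j] pi0 by simp
      have rs: "set (word q) \<subseteq> {..<n}" by (rule word_props(2))
      obtain k g' where g': "g' \<in> G" and sw: "esub (B (j # i0 # word q) g) (eadd (B (i0 # j # word q) g) (esmul k (B (word q) g'))) \<in> I"
        using swap_rel[OF i0j less2.prems(1) g rs] by blast
      have qM: "(q, g) \<in> Mon n l" "(q, g') \<in> Mon n l" unfolding q_def using Mon_dec less2.prems(2) g g' by auto
      have S1: "SP D (B (word q) g')"
        using SP_mono[of "(q, g')" D] qM dq less2.prems(3) by (simp add: mono_eq Mle_def)
      have ih: "SP (deg p) (B (j # word q) g)" using less2.hyps[OF sq less2.prems(1) qM(1)] dq by simp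
      have S2: "SP D (B (i0 # j # word q) g)"
      proof -
        have "SP D (em (X i0) (B (j # word q) g))"
        proof (rule em_X_lincomb[OF ih _ i0n])
          show "B (j # word q) g \<in> Al" using rs less2.prems(1) g by (auto intro!: B_Alg)
          fix m assume m: "m \<in> Mle (deg p)"
          obtain mp mg where mm: "m = (mp, mg)" by fastforce
          show "SP D (B (i0 # word (fst m)) (snd m))"
            using less.IH[OF i0j i0n, of mp mg D] m mm less2.prems(3) by (auto simp: Mle_def)
        qed
        thus ?thesis by (simp add: em_X_B)
      qed
      have "SP D (eadd (B (i0 # j # word q) g) (esmul k (B (word q) g')))" using S1 S2 by (intro SP_add SP_smul)
      thus ?thesis unfolding wp using SP_equiv sw by blast
    qed
  qed
qed

lemma SP_word: "g \<in> G \<Longrightarrow> set w \<subseteq> {..<n} \<Longrightarrow> length w \<le> D \<Longrightarrow> SP D (B w g)"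
proof (induction w arbitrary: g D)
  case Nil
  have "word z0st = []" by (simp add: word_def z0st_def)
  moreover have "(z0st, g) \<in> Mle D" using Nil by (simp add: Mle_def Mon_def deg_def z0st_def)
  ultimately show ?case using SP_mono[of "(z0st, g)" D] by (simp add: mono_eq)
next
  case (Cons j w)
  have ih: "SP (length w) (B w g)" using Cons by simp
  have "SP D (em (X j) (B w g))"
  proof (rule em_X_lincomb[OF ih])
    show "B w g \<in> Al" using Cons.prems by (auto intro!: B_Alg)
    show "j < n" using Cons.prems by simp
    fix m assume m: "m \<in> Mle (length w)"
    obtain mp mg where mm: "m = (mp, mg)" by fastforce
    show "SP D (B (j # word (fst m)) (snd m))"
      using K[of j mp mg D] m mm Cons.prems by (auto simp: Mle_def)
  qed
  thus ?case by (simp add: em_X_B)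
qed

lemma SP_Alg: assumes "a \<in> Al" "\<forall>x\<in>supp a. length (fst x) \<le> D" shows "SP D a"
proof -
  have fa: "finite (supp a)" using assms by (simp add: Alg_iff)
  have "a = (\<lambda>x. \<Sum>y\<in>supp a. a y * B (fst y) (snd y) x)"
  proof
    fix x
    have "(\<Sum>y\<in>supp a. a y * B (fst y) (snd y) x) = (\<Sum>y\<in>supp a. if y = x then a x else 0)"
      by (intro sum.cong) (auto simp: B_def)
    also have "\<dots> = a x" using fa by (simp add: supp_def)
    finally show "a x = (\<Sum>y\<in>supp a. a y * B (fst y) (snd y) x)" by simp
  qed
  moreover have "SP D (\<lambda>x. \<Sum>y\<in>supp a. a y * B (fst y) (snd y) x)"
    using assms by (intro SP_sum[OF fa] ballI SP_word) (auto simp: Alg_iff)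
  ultimately show ?thesis by simp
qed

end

context P begin

lemma lincomb_supp: "finite S \<Longrightarrow> lincomb n S c x \<noteq> 0 \<Longrightarrow> \<exists>m\<in>S. x = (word (fst m), snd m)"
proof -
  assume S: "finite S" and "lincomb n S c x \<noteq> 0"
  hence "(\<Sum>m\<in>S. c m * mono n m x) \<noteq> 0" by (simp add: lincomb_def)
  then obtain m where "m \<in> S" "mono n m x \<noteq> 0" by (metis (mono_tags, lifting) mult_zero_right sum.neutral)
  thus ?thesis by (auto simp: mono_eq B_def split: if_splits)
qed

lemma lincomb_Alg: assumes "finite S" "S \<subseteq> Mon n l" shows "lincomb n S c \<in> Al"
proof -
  have sub: "supp (lincomb n S c) \<subseteq> (\<lambda>m. (word (fst m), snd m)) ` S"
  proof
    fix x assume "x \<in> supp (lincomb n S c)"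
    hence "lincomb n S c x \<noteq> 0" by (simp add: supp_def)
    then obtain m where "m \<in> S" "x = (word (fst m), snd m)" using lincomb_supp[OF assms(1)] by blast
    thus "x \<in> (\<lambda>m. (word (fst m), snd m)) ` S" by blast
  qed
  have fin: "finite ((\<lambda>m. (word (fst m), snd m)) ` S)" using assms by simp
  have "\<forall>x\<in>supp (lincomb n S c). set (fst x) \<subseteq> {..<n} \<and> snd x \<in> G"
  proof
    fix x assume "x \<in> supp (lincomb n S c)"
    then obtain m where m: "m \<in> S" "x = (word (fst m), snd m)" using sub by blast
    have "snd m \<in> G" using m(1) assms(2) by (auto simp: Mon_def)
    thus "set (fst x) \<subseteq> {..<n} \<and> snd x \<in> G" using m(2) word_props(2) by simp
  qed
  thus ?thesis unfolding Alg_iff using finite_subset[OF sub fin] by simp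
qed

lemma MonDeg_eq: "MonDeg n l d = {m \<in> Mle d. deg (fst m) = d}"
  by (auto simp: MonDeg_def Mle_def deg_def)

lemma finite_MonDeg: "finite (MonDeg n l d)" unfolding MonDeg_eq using finite_Mle[of d] by simp

lemma main_basis: "monomials_basis n l z t"
  unfolding monomials_basis_def
proof (intro conjI ballI allI impI)
  fix a assume a: "a \<in> Al"
  let ?D = "\<Sum>x\<in>supp a. length (fst x)"
  have "\<forall>x\<in>supp a. length (fst x) \<le> ?D" using a by (auto intro: member_le_sum simp: Alg_iff)
  hence "SP ?D a" using SP_Alg a by blast
  then obtain c where "esub a (lincomb n (Mle ?D) c) \<in> I" unfolding SP_def by blast
  moreover have "finite (Mle ?D)" "Mle ?D \<subseteq> Mon n l" using finite_Mle by (auto simp: Mle_def)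
  ultimately show "\<exists>S c. finite S \<and> S \<subseteq> Mon n l \<and> esub a (lincomb n S c) \<in> I" by blast
next
  fix S c m assume "finite S \<and> S \<subseteq> Mon n l \<and> lincomb n S c \<in> I" "m \<in> S"
  thus "c m = 0" using independence by blast
qed

lemma main_gr: "gr_map_iso n l z t"
  unfolding gr_map_iso_def
proof (intro allI conjI ballI impI)
  fix d a assume a: "a \<in> Fle n l d"
  have aA: "a \<in> Al" and al: "\<forall>x\<in>supp a. length (fst x) \<le> d" using a by (auto simp: Fle_def supp_def)
  obtain c where c: "esub a (lincomb n (Mle d) c) \<in> I" using SP_Alg[OF aA al] unfolding SP_def by blast
  let ?S = "MonDeg n l d" and ?T = "Mle d - MonDeg n l d"
  let ?b = "lincomb n ?T c"
  have fT: "finite ?T" using finite_Mle by simp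
  have un: "Mle d = ?S \<union> ?T" "?S \<inter> ?T = {}" unfolding MonDeg_eq by auto
  have "lincomb n (Mle d) c = (\<lambda>x. lincomb n ?S c x + ?b x)"
    unfolding lincomb_def by (subst un(1), rule ext, rule sum.union_disjoint) (use finite_MonDeg fT un in auto)
  hence eq: "esub (esub a (lincomb n ?S c)) ?b = esub a (lincomb n (Mle d) c)"
    by (auto simp: esub_def)
  have bA: "?b \<in> Al" using lincomb_Alg[OF fT] by (auto simp: Mle_def)
  have "\<forall>x. ?b x \<noteq> 0 \<longrightarrow> length (fst x) < d"
  proof (intro allI impI)
    fix x assume "?b x \<noteq> 0"
    then obtain m where m: "m \<in> ?T" "x = (word (fst m), snd m)" using lincomb_supp[OF fT] by blast
    have "deg (fst m) < d" using m(1) unfolding MonDeg_eq by (auto simp: Mle_def)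
    thus "length (fst x) < d" using m(2) by (simp add: length_word)
  qed
  hence "?b \<in> Flt n l d" using bA by (simp add: Flt_def)
  moreover have "?S \<subseteq> MonDeg n l d" by simp
  ultimately show "\<exists>S c b. finite S \<and> S \<subseteq> MonDeg n l d \<and> b \<in> Flt n l d \<and> esub (esub a (lincomb n S c)) b \<in> I"
    using eq c finite_MonDeg by metis
next
  fix d S c b m
  assume h: "finite S \<and> S \<subseteq> MonDeg n l d \<and> b \<in> Flt n l d \<and> esub (lincomb n S c) b \<in> I" and m: "m \<in> S"
  have S: "finite S" "S \<subseteq> Mon n l" using h by (auto simp: MonDeg_def)
  have bA: "b \<in> Al" and bl: "\<forall>x. b x \<noteq> 0 \<longrightarrow> length (fst x) < d" using h by (auto simp: Flt_def)
  show "c m = 0"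
  proof (cases "d = 0")
    case True
    hence "b = ezero" using bl by (auto simp: ezero_def)
    hence "esub (lincomb n S c) b = lincomb n S c" by (auto simp: esub_def ezero_def)
    thus ?thesis using h independence[OF S _ m] by simp
  next
    case False
    have "\<forall>x\<in>supp b. length (fst x) \<le> d - 1" using bl False by (auto simp: supp_def)
    then obtain c' where c': "esub b (lincomb n (Mle (d - 1)) c') \<in> I" using SP_Alg[OF bA] unfolding SP_def by blast
    let ?U = "S \<union> Mle (d - 1)"
    let ?c = "\<lambda>u. if u \<in> S then c u else - c' u"
    have disj: "S \<inter> Mle (d - 1) = {}" using h False by (auto simp: MonDeg_def Mle_def deg_def)
    have "lincomb n ?U ?c = esub (lincomb n S c) (lincomb n (Mle (d - 1)) c')"
    proof
      fix x
      have "lincomb n ?U ?c x = (\<Sum>u\<in>S. ?c u * mono n u x) + (\<Sum>u\<in>Mle (d - 1). ?c u * mono n u x)"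
        unfolding lincomb_def by (rule sum.union_disjoint) (use S finite_Mle disj in auto)
      also have "\<dots> = lincomb n S c x - lincomb n (Mle (d - 1)) c' x"
        unfolding lincomb_def using disj by (auto simp: sum_negf[symmetric] intro!: arg_cong2[where f="(+)"] sum.cong)
      finally show "lincomb n ?U ?c x = esub (lincomb n S c) (lincomb n (Mle (d - 1)) c') x" by (simp add: esub_def)
    qed
    moreover have "esub (lincomb n S c) (lincomb n (Mle (d - 1)) c') = eadd (esub (lincomb n S c) b) (esub b (lincomb n (Mle (d - 1)) c'))"
      by (auto simp: esub_def eadd_def)
    ultimately have "lincomb n ?U ?c \<in> I" using h c' Ideal.add by simp
    moreover have "finite ?U" "?U \<subseteq> Mon n l" using S finite_Mle by (auto simp: Mle_def)
    ultimately have "?c m = 0" using independence m by blast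
    thus ?thesis using m by simp
  qed
qed

end

theorem mainTheorem2:
  fixes n l :: nat and \<zeta> :: complex and t :: "nat \<Rightarrow> complex"
  assumes "n \<ge> 3" and "l \<ge> 2"
    and "\<zeta> ^ l = 1" and "\<forall>k. 0 < k \<and> k < l \<longrightarrow> \<zeta> ^ k \<noteq> 1"
  shows "monomials_basis n l \<zeta> t \<and> gr_map_iso n l \<zeta> t"
proof -
  interpret P n l \<zeta> t using assms by unfold_locales auto
  show ?thesis using main_basis main_gr by simp
qed

end
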